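(* Let $G$ be a finite solvable group, $H$ a subgroup of $G$, and $i\geq 1$ an integer. Then there exist finitely many (possibly zero) subgroups $H_1,\dots,H_r$ of $G$ and one-dimensional characters $\chi_j$ of $H_j$ such that \[\mathrm{Ind}_H^G(1_H)=\mathrm{Ind}_{HG^i}^G(1_{HG^i})+\sum_{j=1}^r \mathrm{Ind}_{H_j}^G(\chi_j).\]
   Context: The derived series of $G$ is $G^0=G$, $G^1=[G,G]$, $G^{k}=[G^{k-1},G^{k-1}]$ for $k\ge1$, where $[X,X]$ is the subgroup generated by all commutators $xyx^{-1}y^{-1}$, $x,y\in X$. $1_H$ is the trivial character of $H$, $\mathrm{Ind}$ denotes induction of characters, and a one-dimensional character is a character of degree $1$. *)

theory Defs
  imports "HOL-Algebra.Algebra" "HOL-Analysis.Analysis"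
begin

definition induced :: "('a, 'b) monoid_scheme \<Rightarrow> 'a set \<Rightarrow> ('a \<Rightarrow> complex) \<Rightarrow> 'a \<Rightarrow> complex" where
  "induced G H chi g =
     (1 / of_nat (card H)) *
     (\<Sum>x\<in>carrier G. (if x \<otimes>\<^bsub>G\<^esub> g \<otimes>\<^bsub>G\<^esub> inv\<^bsub>G\<^esub> x \<in> H
                         then chi (x \<otimes>\<^bsub>G\<^esub> g \<otimes>\<^bsub>G\<^esub> inv\<^bsub>G\<^esub> x) else 0))"

definition trivial_char :: "'a \<Rightarrow> complex" where
  "trivial_char x = 1"

definition linear_char :: "('a, 'b) monoid_scheme \<Rightarrow> 'a set \<Rightarrow> ('a \<Rightarrow> complex) \<Rightarrow> bool" where
  "linear_char G H chi \<longleftrightarrow>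
     (\<forall>x\<in>H. chi x \<noteq> 0) \<and> (\<forall>x\<in>H. \<forall>y\<in>H. chi (x \<otimes>\<^bsub>G\<^esub> y) = chi x * chi y)"

definition derived_series :: "('a, 'b) monoid_scheme \<Rightarrow> nat \<Rightarrow> 'a set" where
  "derived_series G k = (derived G ^^ k) (carrier G)"

end

theory Submission
  imports Defs
begin


lemma card_fibers:
  assumes "finite A" "\<And>y. y \<in> f ` A \<Longrightarrow> card {x\<in>A. f x = y} = k"
  shows "card A = card (f ` A) * k"
proof -
  have "card A = (\<Sum>x\<in>A. 1::nat)" by simp
  also have "\<dots> = (\<Sum>y\<in>f ` A. \<Sum>x\<in>{x\<in>A. f x = y}. 1)"
    using sum.group[of A "f ` A" f "\<lambda>_. 1::nat"] assms by auto
  also have "\<dots> = (\<Sum>y\<in>f ` A. k)" using assms by (intro sum.cong) auto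
  finally show ?thesis by simp
qed

definition chars :: "('a, 'b) monoid_scheme \<Rightarrow> 'a set \<Rightarrow> 'a set \<Rightarrow> ('a \<Rightarrow> complex) set" where
  "chars G S E = {f. (\<forall>x\<in>S. \<forall>y\<in>S. f (x \<otimes>\<^bsub>G\<^esub> y) = f x * f y) \<and> (\<forall>x\<in>E. f x = 1) \<and> (\<forall>x. x \<notin> S \<longrightarrow> f x = 1)}"

definition comm_in :: "('a, 'b) monoid_scheme \<Rightarrow> 'a set \<Rightarrow> 'a set \<Rightarrow> bool" where
  "comm_in G S E \<longleftrightarrow> (\<forall>x\<in>S. \<forall>y\<in>S. x \<otimes>\<^bsub>G\<^esub> y \<otimes>\<^bsub>G\<^esub> inv\<^bsub>G\<^esub> x \<otimes>\<^bsub>G\<^esub> inv\<^bsub>G\<^esub> y \<in> E)"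

definition extg :: "('a, 'b) monoid_scheme \<Rightarrow> 'a set \<Rightarrow> 'a \<Rightarrow> 'a set" where
  "extg G S a = {s \<otimes>\<^bsub>G\<^esub> a [^]\<^bsub>G\<^esub> (k::nat) | s k. s \<in> S}"

context group
begin

lemma sub_pow_closed:
  assumes "subgroup S G" "x \<in> S" shows "x [^] (k::nat) \<in> S"
proof (induction k)
  case 0 then show ?case using assms subgroup.one_closed by simp
next
  case (Suc k) then show ?case using assms by (simp add: subgroup.m_closed)
qed

lemma chars_one:
  assumes "f \<in> chars G S E" "\<one> \<in> E" shows "f \<one> = 1"
  using assms unfolding chars_def by auto

lemma chars_nonzero:
  assumes "f \<in> chars G S E" "subgroup S G" "\<one> \<in> E"
  shows "f x \<noteq> 0"
proof (cases "x \<in> S")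
  case True
  have "f (x \<otimes> inv x) = f x * f (inv x)" using assms True unfolding chars_def
    by (auto simp: subgroup.m_inv_closed)
  moreover have "x \<otimes> inv x = \<one>" using True assms(2) subgroup.mem_carrier by (metis r_inv)
  ultimately show ?thesis using chars_one[OF assms(1,3)] by auto
next
  case False then show ?thesis using assms unfolding chars_def by auto
qed

lemma chars_pow:
  assumes "f \<in> chars G S E" "subgroup S G" "\<one> \<in> E" "x \<in> S"
  shows "f (x [^] (k::nat)) = f x ^ k"
proof (induction k)
  case 0 then show ?case using chars_one[OF assms(1,3)] by simp
next
  case (Suc k)
  have "x [^] Suc k = x [^] k \<otimes> x" by simp
  moreover have "x [^] k \<in> S" using assms sub_pow_closed by blast
  ultimately show ?case using Suc assms unfolding chars_def by auto
qed

lemma chars_inv: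
  assumes "f \<in> chars G S E" "subgroup S G" "\<one> \<in> E" "x \<in> S"
  shows "f (inv x) = 1 / f x"
proof -
  have "f (x \<otimes> inv x) = f x * f (inv x)" using assms unfolding chars_def
    by (auto simp: subgroup.m_inv_closed)
  moreover have "x \<otimes> inv x = \<one>" using assms subgroup.mem_carrier by (metis r_inv)
  ultimately show ?thesis using chars_one[OF assms(1,3)] chars_nonzero[OF assms(1-3), of x]
    by (simp add: field_simps)
qed

end

context group begin
lemma lcancel1 [simp]: "x \<in> carrier G \<Longrightarrow> y \<in> carrier G \<Longrightarrow> x \<otimes> (inv x \<otimes> y) = y"
  by (metis inv_closed l_one m_assoc r_inv)
lemma lcancel2 [simp]: "x \<in> carrier G \<Longrightarrow> y \<in> carrier G \<Longrightarrow> inv x \<otimes> (x \<otimes> y) = y"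
  by (metis inv_closed l_one m_assoc l_inv)

lemma comm_inE:
  assumes "comm_in G B E" "x \<in> B" "y \<in> B"
  shows "x \<otimes> y \<otimes> inv x \<otimes> inv y \<in> E"
  using assms unfolding comm_in_def by blast
end

locale extsetup = group G for G (structure) +
  fixes S E B a
  assumes fin: "finite (carrier G)" and SG: "subgroup S G" and EG: "subgroup E G"
    and BG: "subgroup B G" and ES: "E \<subseteq> S" and SB: "S \<subseteq> B" and aB: "a \<in> B"
    and comm: "comm_in G B E"
begin

definition n :: nat where "n = (LEAST k. 0 < k \<and> a [^] k \<in> S)"
definition ET :: "'a set" where "ET = extg G S a"

lemma a_carr: "a \<in> carrier G" by (rule subgroup.mem_carrier[OF BG aB])
lemma S_carr: "x \<in> S \<Longrightarrow> x \<in> carrier G" by (rule subgroup.mem_carrier[OF SG])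
lemma B_carr: "x \<in> B \<Longrightarrow> x \<in> carrier G" by (rule subgroup.mem_carrier[OF BG])
lemma apow_B: "a [^] (k::nat) \<in> B" using sub_pow_closed[OF BG aB] .

lemma ex_ord: "\<exists>d>0. a [^] (d::nat) = \<one>"
proof -
  have "1 \<le> ord a" by (rule ord_ge_1[OF fin a_carr])
  then have "0 < ord a \<and> a [^] ord a = \<one>" using pow_ord_eq_1[OF a_carr] by simp
  then show ?thesis by (rule exI)
qed

lemma n_props: "0 < n" "a [^] n \<in> S"
proof -
  obtain d where d: "d > 0" "a [^] (d::nat) = \<one>" using ex_ord by blast
  have "0 < d \<and> a [^] d \<in> S" using d subgroup.one_closed[OF SG] by simp
  then have "0 < n \<and> a [^] n \<in> S" unfolding n_def by (rule LeastI[of "\<lambda>k. 0 < k \<and> a [^] k \<in> S"])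
  then show "0 < n" "a [^] n \<in> S" by auto
qed

lemma n_dvd: assumes "a [^] (m::nat) \<in> S" shows "n dvd m"
proof -
  define q r where "q = m div n" "r = m mod n"
  have m: "m = n * q + r" using q_r_def by simp
  have "a [^] m = (a [^] n) [^] q \<otimes> a [^] r"
    using a_carr by (metis m nat_pow_mult nat_pow_pow)
  then have "a [^] r = inv ((a [^] n) [^] q) \<otimes> a [^] m"
    using a_carr by simp
  moreover have "(a [^] n) [^] q \<in> S" using sub_pow_closed[OF SG n_props(2)] .
  ultimately have "a [^] r \<in> S" using assms SG by (simp add: subgroup.m_closed subgroup.m_inv_closed)
  moreover have "r < n" using q_r_def n_props(1) by simp
  ultimately have "\<not> (0 < r)" unfolding n_def using not_less_Least[of r "\<lambda>k. 0 < k \<and> a [^] k \<in> S"] by auto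
  then show ?thesis using q_r_def by auto
qed

lemma inv_apow: "\<exists>m. inv (a [^] (k::nat)) = a [^] (m::nat)"
proof -
  obtain d where d: "d > 0" "a [^] (d::nat) = \<one>" using ex_ord by blast
  have "a [^] (k * (d - 1)) \<otimes> a [^] k = a [^] (k * d)"
    using a_carr d(1) by (simp add: nat_pow_mult algebra_simps)
  also have "\<dots> = \<one>" using a_carr d by (simp add: mult.commute nat_pow_pow[symmetric])
  finally have "inv (a [^] k) = a [^] (k * (d - 1))" using a_carr
    by (simp add: inv_equality)
  then show ?thesis by blast
qed

lemma T_mult: assumes "s \<in> S" "t \<in> S"
  shows "(s \<otimes> a [^] (k::nat)) \<otimes> (t \<otimes> a [^] (j::nat)) =
    (s \<otimes> t \<otimes> (inv t \<otimes> a [^] k \<otimes> t \<otimes> inv (a [^] k))) \<otimes> a [^] (k + j)"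
  using assms S_carr a_carr by (simp add: m_assoc nat_pow_mult[symmetric])

lemma T_comm1: assumes "t \<in> S" shows "inv t \<otimes> a [^] (k::nat) \<otimes> t \<otimes> inv (a [^] k) \<in> E"
proof -
  have "inv t \<in> B" using assms SB subgroup.m_inv_closed[OF BG] by blast
  then have "inv t \<otimes> a [^] k \<otimes> inv (inv t) \<otimes> inv (a [^] k) \<in> E"
    by (rule comm_inE[OF comm _ apow_B])
  then show ?thesis using S_carr[OF assms] by simp
qed

lemma T_subgroup: "subgroup ET G"
proof (rule subgroupI)
  show "ET \<subseteq> carrier G" unfolding ET_def extg_def using S_carr a_carr by auto
  have "\<one> = \<one> \<otimes> a [^] (0::nat)" by simp
  then have "\<one> \<in> ET" unfolding ET_def extg_def using subgroup.one_closed[OF SG] by blast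
  then show "ET \<noteq> {}" by blast
next
  fix x assume "x \<in> ET"
  then obtain s k where x: "x = s \<otimes> a [^] (k::nat)" "s \<in> S" unfolding ET_def extg_def by auto
  obtain m where m: "inv (a [^] k) = a [^] (m::nat)" using inv_apow by blast
  define e where "e = a [^] m"
  have e: "e \<in> B" "e \<in> carrier G" using apow_B a_carr by (auto simp: e_def)
  have sc: "s \<in> carrier G" using S_carr x(2) .
  have ak: "a [^] k \<in> carrier G" using a_carr by simp
  have "inv x = inv (a [^] k) \<otimes> inv s" using x sc ak by (simp add: inv_mult_group)
  also have "\<dots> = e \<otimes> inv s" using m e_def by simp
  also have "\<dots> = (inv s \<otimes> (s \<otimes> e \<otimes> inv s \<otimes> inv e)) \<otimes> e"
    using sc e(2) by (simp add: m_assoc)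
  finally have ix: "inv x = (inv s \<otimes> (s \<otimes> e \<otimes> inv s \<otimes> inv e)) \<otimes> a [^] m"
    by (simp add: e_def)
  have "s \<otimes> e \<otimes> inv s \<otimes> inv e \<in> E" using comm_inE[OF comm] x(2) SB e(1) by blast
  then have "s \<otimes> e \<otimes> inv s \<otimes> inv e \<in> S" using ES by blast
  then have "inv s \<otimes> (s \<otimes> e \<otimes> inv s \<otimes> inv e) \<in> S"
    using x(2) SG by (simp add: subgroup.m_closed subgroup.m_inv_closed)
  then show "inv x \<in> ET" unfolding ET_def extg_def using ix by blast
next
  fix x y assume "x \<in> ET" "y \<in> ET"
  then obtain s k t j where x: "x = s \<otimes> a [^] (k::nat)" "s \<in> S" and y: "y = t \<otimes> a [^] (j::nat)" "t \<in> S"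
    unfolding ET_def extg_def by auto
  have "inv t \<otimes> a [^] k \<otimes> t \<otimes> inv (a [^] k) \<in> S" using T_comm1[OF y(2)] ES by blast
  then have "s \<otimes> t \<otimes> (inv t \<otimes> a [^] k \<otimes> t \<otimes> inv (a [^] k)) \<in> S"
    using x y SG by (simp add: subgroup.m_closed)
  then show "x \<otimes> y \<in> ET" unfolding ET_def extg_def using T_mult[OF x(2) y(2)] x y by blast
qed

lemma S_sub_T: "S \<subseteq> ET"
proof
  fix s assume "s \<in> S" then have "s = s \<otimes> a [^] (0::nat)" using S_carr by simp
  then show "s \<in> ET" using \<open>s \<in> S\<close> unfolding ET_def extg_def by blast
qed

lemma a_in_T: "a \<in> ET"
proof -
  have "a = \<one> \<otimes> a [^] (1::nat)" using a_carr by simp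
  then show ?thesis unfolding ET_def extg_def using subgroup.one_closed[OF SG] by blast
qed

lemma T_sub_B: "ET \<subseteq> B"
  unfolding ET_def extg_def using SB apow_B BG by (auto simp: subgroup.m_closed)

lemma T_card: "card ET = n * card S"
proof -
  have "bij_betw (\<lambda>(s, k). s \<otimes> a [^] k) (S \<times> {..<n}) ET"
  proof (rule bij_betw_imageI)
    show "inj_on (\<lambda>(s, k). s \<otimes> a [^] k) (S \<times> {..<n})"
    proof (rule inj_onI, clarify)
      fix s k t j assume as: "s \<in> S" "k < n" "t \<in> S" "j < n" "s \<otimes> a [^] k = t \<otimes> a [^] j"
      have kj: "k = j" if "s \<in> S" "t \<in> S" "k \<le> j" "j < n" "s \<otimes> a [^] k = t \<otimes> a [^] j" for s t k j
      proof -
        have sc: "s \<in> carrier G" "t \<in> carrier G" using that S_carr by auto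
        have "a [^] (j - k) \<otimes> a [^] k = a [^] (j - k + k)" by (rule nat_pow_mult[OF a_carr])
        then have "a [^] j = a [^] (j - k) \<otimes> a [^] k" using that by simp
        then have "s \<otimes> a [^] k = (t \<otimes> a [^] (j - k)) \<otimes> a [^] k" using that sc a_carr by (simp add: m_assoc)
        then have "s = t \<otimes> a [^] (j - k)" using sc a_carr by (simp add: right_cancel)
        then have "a [^] (j - k) = inv t \<otimes> s" using sc a_carr by simp
        then have "a [^] (j - k) \<in> S" using that SG by (simp add: subgroup.m_closed subgroup.m_inv_closed)
        then have "n dvd (j - k)" by (rule n_dvd)
        moreover have "j - k < n" using that by linarith
        ultimately have "j - k = 0" using nat_dvd_not_less by blast
        then show "k = j" using that by linarith
      qed
      have "k = j" using kj[of s t k j] kj[of t s j k] as by (cases "k \<le> j") auto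
      then show "s = t \<and> k = j" using as S_carr a_carr by (simp add: right_cancel)
    qed
  next
    show "(\<lambda>(s, k). s \<otimes> a [^] k) ` (S \<times> {..<n}) = ET"
    proof
      show "(\<lambda>(s, k). s \<otimes> a [^] k) ` (S \<times> {..<n}) \<subseteq> ET" unfolding ET_def extg_def by auto
      show "ET \<subseteq> (\<lambda>(s, k). s \<otimes> a [^] k) ` (S \<times> {..<n})"
      proof
        fix x assume "x \<in> ET"
        then obtain s m where x: "x = s \<otimes> a [^] (m::nat)" "s \<in> S" unfolding ET_def extg_def by auto
        have m: "m = n * (m div n) + m mod n" by simp
        have "(a [^] n) [^] (m div n) \<otimes> a [^] (m mod n) = a [^] m"
          using a_carr by (simp add: nat_pow_mult nat_pow_pow)
        then have "x = (s \<otimes> (a [^] n) [^] (m div n)) \<otimes> a [^] (m mod n)"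
          using x S_carr a_carr by (simp add: m_assoc del: nat_pow_mult)
        moreover have "s \<otimes> (a [^] n) [^] (m div n) \<in> S"
          using x(2) sub_pow_closed[OF SG n_props(2)] SG by (simp add: subgroup.m_closed)
        moreover have "m mod n < n" using n_props(1) by simp
        ultimately show "x \<in> (\<lambda>(s, k). s \<otimes> a [^] k) ` (S \<times> {..<n})" by force
      qed
    qed
  qed
  then have "card ET = card (S \<times> {..<n})" by (simp add: bij_betw_same_card)
  then show ?thesis by (simp add: card_cartesian_product)
qed


definition extchar :: "('a \<Rightarrow> complex) \<Rightarrow> complex \<Rightarrow> 'a \<Rightarrow> complex" where
  "extchar \<mu> \<omega> x = (if x \<in> ET then (let p = (SOME p. fst p \<in> S \<and> x = fst p \<otimes> a [^] (snd p::nat)) in \<mu> (fst p) * \<omega> ^ snd p) else 1)"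

lemma one_E: "\<one> \<in> E" using subgroup.one_closed[OF EG] .

lemma apow_val:
  assumes mu: "\<mu> \<in> chars G S E" and om: "\<omega> ^ n = \<mu> (a [^] n)" and am: "a [^] (m::nat) \<in> S"
  shows "\<mu> (a [^] m) = \<omega> ^ m"
proof -
  obtain q where q: "m = n * q" using n_dvd[OF am] by blast
  have "a [^] m = (a [^] n) [^] q" using a_carr q by (simp add: nat_pow_pow)
  then have "\<mu> (a [^] m) = \<mu> (a [^] n) ^ q" using chars_pow[OF mu SG one_E n_props(2)] by simp
  also have "\<dots> = \<omega> ^ m" using om q by (simp add: power_mult)
  finally show ?thesis .
qed

lemma rep_indep1:
  assumes mu: "\<mu> \<in> chars G S E" and om: "\<omega> ^ n = \<mu> (a [^] n)"
    and "s \<in> S" "t \<in> S" "k \<le> j" "s \<otimes> a [^] (k::nat) = t \<otimes> a [^] (j::nat)"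
  shows "\<mu> s * \<omega> ^ k = \<mu> t * \<omega> ^ j"
proof -
  have sc: "s \<in> carrier G" "t \<in> carrier G" using assms S_carr by auto
  have "a [^] (j - k) \<otimes> a [^] k = a [^] (j - k + k)" by (rule nat_pow_mult[OF a_carr])
  then have "a [^] j = a [^] (j - k) \<otimes> a [^] k" using assms by simp
  then have "s \<otimes> a [^] k = (t \<otimes> a [^] (j - k)) \<otimes> a [^] k" using assms sc a_carr by (simp add: m_assoc)
  then have s: "s = t \<otimes> a [^] (j - k)" using sc a_carr by (simp add: right_cancel)
  then have "a [^] (j - k) = inv t \<otimes> s" using sc a_carr by simp
  then have ajk: "a [^] (j - k) \<in> S" using assms SG by (simp add: subgroup.m_closed subgroup.m_inv_closed)
  have "\<mu> s = \<mu> t * \<mu> (a [^] (j - k))" using mu assms(4) ajk s unfolding chars_def by auto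
  also have "\<dots> = \<mu> t * \<omega> ^ (j - k)" using apow_val[OF mu om ajk] by simp
  finally have "\<mu> s * \<omega> ^ k = \<mu> t * (\<omega> ^ (j - k) * \<omega> ^ k)" by simp
  also have "\<omega> ^ (j - k) * \<omega> ^ k = \<omega> ^ j" using assms(5) by (simp add: power_add[symmetric])
  finally show ?thesis .
qed

lemma rep_indep:
  assumes mu: "\<mu> \<in> chars G S E" and om: "\<omega> ^ n = \<mu> (a [^] n)"
    and "s \<in> S" "t \<in> S" "s \<otimes> a [^] (k::nat) = t \<otimes> a [^] (j::nat)"
  shows "\<mu> s * \<omega> ^ k = \<mu> t * \<omega> ^ j"
proof (cases "k \<le> j")
  case True then show ?thesis using rep_indep1[OF mu om] assms by blast
next
  case False
  then have "\<mu> t * \<omega> ^ j = \<mu> s * \<omega> ^ k" using rep_indep1[OF mu om assms(4,3)] assms(5) by simp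
  then show ?thesis by simp
qed

lemma extchar_val:
  assumes mu: "\<mu> \<in> chars G S E" and om: "\<omega> ^ n = \<mu> (a [^] n)" and s: "s \<in> S"
  shows "extchar \<mu> \<omega> (s \<otimes> a [^] (k::nat)) = \<mu> s * \<omega> ^ k"
proof -
  let ?x = "s \<otimes> a [^] k"
  let ?P = "\<lambda>p. fst p \<in> S \<and> ?x = fst p \<otimes> a [^] (snd p::nat)"
  have xT: "?x \<in> ET" unfolding ET_def extg_def using s by blast
  have "?P (s, k)" using s by simp
  then have P: "?P (SOME p. ?P p)" by (rule someI)
  have "extchar \<mu> \<omega> ?x = \<mu> (fst (SOME p. ?P p)) * \<omega> ^ snd (SOME p. ?P p)"
    unfolding extchar_def using xT by (simp add: Let_def)
  also have "\<dots> = \<mu> s * \<omega> ^ k"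
    using rep_indep[OF mu om, of "fst (SOME p. ?P p)" s "snd (SOME p. ?P p)" k] P s by simp
  finally show ?thesis .
qed

lemma ET_elem: "x \<in> ET \<Longrightarrow> \<exists>s k. s \<in> S \<and> x = s \<otimes> a [^] (k::nat)"
  unfolding ET_def extg_def by blast

lemma extchar_chars:
  assumes mu: "\<mu> \<in> chars G S E" and om: "\<omega> ^ n = \<mu> (a [^] n)"
  shows "extchar \<mu> \<omega> \<in> chars G ET E"
  unfolding chars_def
proof (intro CollectI conjI ballI allI impI)
  fix x y assume "x \<in> ET" "y \<in> ET"
  then obtain s k t j where x: "x = s \<otimes> a [^] (k::nat)" "s \<in> S" and y: "y = t \<otimes> a [^] (j::nat)" "t \<in> S"
    using ET_elem by metis
  define c where "c = inv t \<otimes> a [^] k \<otimes> t \<otimes> inv (a [^] k)"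
  have cE: "c \<in> E" unfolding c_def by (rule T_comm1[OF y(2)])
  then have cS: "c \<in> S" using ES by blast
  have stS: "s \<otimes> t \<in> S" using x y SG by (simp add: subgroup.m_closed)
  have "x \<otimes> y = (s \<otimes> t \<otimes> c) \<otimes> a [^] (k + j)" unfolding c_def using T_mult[OF x(2) y(2)] x y by simp
  moreover have "s \<otimes> t \<otimes> c \<in> S" using stS cS SG by (simp add: subgroup.m_closed)
  ultimately have "extchar \<mu> \<omega> (x \<otimes> y) = \<mu> (s \<otimes> t \<otimes> c) * \<omega> ^ (k + j)"
    using extchar_val[OF mu om] by simp
  also have "\<mu> (s \<otimes> t \<otimes> c) = \<mu> s * \<mu> t * \<mu> c" using mu stS cS x y unfolding chars_def by auto
  also have "\<mu> c = 1" using mu cE unfolding chars_def by auto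
  finally have "extchar \<mu> \<omega> (x \<otimes> y) = (\<mu> s * \<omega> ^ k) * (\<mu> t * \<omega> ^ j)" by (simp add: power_add)
  then show "extchar \<mu> \<omega> (x \<otimes> y) = extchar \<mu> \<omega> x * extchar \<mu> \<omega> y"
    using extchar_val[OF mu om x(2), of k] extchar_val[OF mu om y(2), of j] x y by simp
next
  fix x assume "x \<in> E"
  then have xS: "x \<in> S" using ES by blast
  have "x = x \<otimes> a [^] (0::nat)" using S_carr[OF xS] by simp
  then have "extchar \<mu> \<omega> x = \<mu> x * \<omega> ^ 0" using extchar_val[OF mu om xS, of 0] by simp
  then show "extchar \<mu> \<omega> x = 1" using mu \<open>x \<in> E\<close> unfolding chars_def by auto
next
  fix x assume "x \<notin> ET" then show "extchar \<mu> \<omega> x = 1" unfolding extchar_def by simp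
qed

definition restr :: "('a \<Rightarrow> complex) \<Rightarrow> 'a set \<Rightarrow> 'a \<Rightarrow> complex" where
  "restr f A = (\<lambda>x. if x \<in> A then f x else 1)"

lemma restr_extchar:
  assumes mu: "\<mu> \<in> chars G S E" and om: "\<omega> ^ n = \<mu> (a [^] n)"
  shows "restr (extchar \<mu> \<omega>) S = \<mu>" "extchar \<mu> \<omega> a = \<omega>"
proof -
  show "restr (extchar \<mu> \<omega>) S = \<mu>"
  proof
    fix x show "restr (extchar \<mu> \<omega>) S x = \<mu> x"
    proof (cases "x \<in> S")
      case True
      have "x = x \<otimes> a [^] (0::nat)" using S_carr[OF True] by simp
      then have "extchar \<mu> \<omega> x = \<mu> x * \<omega> ^ 0" using extchar_val[OF mu om True, of 0] by simp
      then show ?thesis using True unfolding restr_def by simp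
    next
      case False then show ?thesis using mu unfolding restr_def chars_def by auto
    qed
  qed
  have "a = \<one> \<otimes> a [^] (1::nat)" using a_carr by simp
  then have "extchar \<mu> \<omega> a = \<mu> \<one> * \<omega> ^ 1"
    using extchar_val[OF mu om subgroup.one_closed[OF SG], of 1] by simp
  then show "extchar \<mu> \<omega> a = \<omega>" using chars_one[OF mu one_E] by simp
qed

lemma restr_chars:
  assumes chi: "h \<in> chars G ET E"
  shows "restr h S \<in> chars G S E" "h a ^ n = restr h S (a [^] n)"
proof -
  have hm: "\<forall>x\<in>S. \<forall>y\<in>S. h (x \<otimes> y) = h x * h y" using chi S_sub_T unfolding chars_def by blast
  show "restr h S \<in> chars G S E" using hm chi ES SG unfolding chars_def restr_def
    by (auto simp: subgroup.m_closed)
  have "h (a [^] n) = h a ^ n" by (rule chars_pow[OF chi T_subgroup one_E a_in_T])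
  then show "h a ^ n = restr h S (a [^] n)" using n_props(2) unfolding restr_def by simp
qed

lemma chars_ET_eq:
  assumes c1: "f1 \<in> chars G ET E" and c2: "f2 \<in> chars G ET E"
    and r: "restr f1 S = restr f2 S" and av: "f1 a = f2 a"
  shows "f1 = f2"
proof
  fix x show "f1 x = f2 x"
  proof (cases "x \<in> ET")
    case True
    then obtain s k where x: "s \<in> S" "x = s \<otimes> a [^] (k::nat)" using ET_elem by metis
    have sT: "s \<in> ET" and akT: "a [^] k \<in> ET" using x S_sub_T sub_pow_closed[OF T_subgroup a_in_T] by auto
    have "f1 x = f1 s * f1 (a [^] k)" using c1 sT akT x unfolding chars_def by auto
    also have "\<dots> = f1 s * f1 a ^ k" using chars_pow[OF c1 T_subgroup one_E a_in_T] by simp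
    also have "f1 s = f2 s" using fun_cong[OF r, of s] x unfolding restr_def by simp
    also have "f2 s * f1 a ^ k = f2 s * f2 (a [^] k)" using chars_pow[OF c2 T_subgroup one_E a_in_T] av by simp
    also have "\<dots> = f2 x" using c2 sT akT x unfolding chars_def by auto
    finally show ?thesis .
  next
    case False then show ?thesis using c1 c2 unfolding chars_def by auto
  qed
qed

lemma ext_count:
  assumes fS: "finite (chars G S E)"
  shows "finite (chars G ET E)" "card (chars G ET E) = n * card (chars G S E)"
proof -
  let ?Phi = "\<lambda>h. (restr h S, h a)"
  let ?Sig = "SIGMA \<mu>:chars G S E. {\<omega>. \<omega> ^ n = \<mu> (a [^] n)}"
  have bij: "bij_betw ?Phi (chars G ET E) ?Sig"
  proof (rule bij_betwI')
    fix x y assume "x \<in> chars G ET E" "y \<in> chars G ET E"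
    then show "(?Phi x = ?Phi y) = (x = y)" using chars_ET_eq by auto
  next
    fix x assume "x \<in> chars G ET E"
    then show "?Phi x \<in> ?Sig" using restr_chars by auto
  next
    fix y assume "y \<in> ?Sig"
    then obtain \<mu> \<omega> where y: "y = (\<mu>, \<omega>)" "\<mu> \<in> chars G S E" "\<omega> ^ n = \<mu> (a [^] n)" by blast
    show "\<exists>x\<in>chars G ET E. y = ?Phi x"
      using y extchar_chars[OF y(2,3)] restr_extchar[OF y(2,3)] by (intro bexI[of _ "extchar \<mu> \<omega>"]) auto
  qed
  have nz: "\<mu> (a [^] n) \<noteq> 0" if "\<mu> \<in> chars G S E" for \<mu>
    using chars_nonzero[OF that SG one_E] .
  have cardr: "card {\<omega>. \<omega> ^ n = \<mu> (a [^] n)} = n" if "\<mu> \<in> chars G S E" for \<mu>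
    using card_nth_roots[OF nz[OF that] n_props(1)] .
  have finr: "finite {\<omega>. \<omega> ^ n = \<mu> (a [^] n)}" if "\<mu> \<in> chars G S E" for \<mu>
    using cardr[OF that] n_props(1) by (metis card.infinite less_irrefl)
  have fSig: "finite ?Sig" using fS finr by (intro finite_SigmaI) auto
  show "finite (chars G ET E)" using bij_betw_finite[OF bij] fSig by simp
  have "card (chars G ET E) = card ?Sig" using bij_betw_same_card[OF bij] .
  also have "\<dots> = (\<Sum>\<mu>\<in>chars G S E. n)" using fS finr cardr by (simp add: card_SigmaI)
  finally show "card (chars G ET E) = n * card (chars G S E)" by simp
qed

end

context group begin

lemma chars_triv: "chars G E E = {\<lambda>_. 1}"
proof
  show "chars G E E \<subseteq> {\<lambda>_. 1}"
  proof
    fix f assume f: "f \<in> chars G E E"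
    have "f x = 1" for x using f unfolding chars_def by (cases "x \<in> E") auto
    then show "f \<in> {\<lambda>_. 1}" by auto
  qed
  show "{\<lambda>_. 1} \<subseteq> chars G E E" unfolding chars_def by auto
qed

lemma chars_count:
  assumes fin: "finite (carrier G)" and SG: "subgroup S G" and EG: "subgroup E G"
    and ES: "E \<subseteq> S" and comm: "comm_in G S E"
  shows "finite (chars G S E) \<and> card (chars G S E) * card E = card S"
proof -
  define F where "F = (\<lambda>xs. foldr (\<lambda>a T. extg G T a) xs E)"
  have gen: "subgroup (F xs) G \<and> E \<subseteq> F xs \<and> F xs \<subseteq> S \<and> set xs \<subseteq> F xs \<and>
      finite (chars G (F xs) E) \<and> card (chars G (F xs) E) * card E = card (F xs)"
    if "set xs \<subseteq> S" for xs
    using that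
  proof (induction xs)
    case Nil
    then show ?case using EG ES unfolding F_def by (simp add: chars_triv)
  next
    case (Cons a xs)
    then have IH: "subgroup (F xs) G" "E \<subseteq> F xs" "F xs \<subseteq> S" "set xs \<subseteq> F xs"
      "finite (chars G (F xs) E)" "card (chars G (F xs) E) * card E = card (F xs)" "a \<in> S"
      by auto
    have ex: "extsetup G (F xs) E S a"
      by (intro extsetup.intro extsetup_axioms.intro is_group) (use fin IH EG SG comm in auto)
    interpret X: extsetup G "F xs" E S a by (rule ex)
    have "F (a # xs) = extg G (F xs) a" unfolding F_def by simp
    then have Fa: "F (a # xs) = X.ET" using X.ET_def by simp
    have c1: "card (chars G X.ET E) = X.n * card (chars G (F xs) E)" using X.ext_count[OF IH(5)] by simp
    have "card (chars G X.ET E) * card E = X.n * (card (chars G (F xs) E) * card E)" using c1 by simp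
    also have "\<dots> = card X.ET" using IH(6) X.T_card by simp
    finally have "card (chars G X.ET E) * card E = card X.ET" .
    then show ?case unfolding Fa using X.T_subgroup X.S_sub_T X.T_sub_B X.a_in_T IH X.ext_count[OF IH(5)]
      by auto
  qed
  have "finite S" using fin SG subgroup.subset finite_subset by blast
  then obtain xs where xs: "set xs = S" using finite_list by blast
  then have "F xs = S" using gen[of xs] by auto
  then show ?thesis using gen[of xs] xs by auto
qed

end

context group begin

lemma chars_mult_closed:
  assumes "f \<in> chars G S E" "g \<in> chars G S E"
  shows "(\<lambda>y. f y * g y) \<in> chars G S E"
  using assms unfolding chars_def by auto

lemma chars_div_closed:
  assumes "f \<in> chars G S E" "g \<in> chars G S E" "\<And>y. g y \<noteq> 0"
  shows "(\<lambda>y. f y / g y) \<in> chars G S E"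
  using assms unfolding chars_def by auto

lemma sum_shift_zero:
  fixes F :: "'c \<Rightarrow> complex"
  assumes "finite A" "bij_betw p A A" "\<And>u. u \<in> A \<Longrightarrow> F (p u) = c * F u" "c \<noteq> 1"
  shows "sum F A = 0"
proof -
  have "sum F A = sum (F \<circ> p) A" using sum.reindex_bij_betw[OF assms(2), of F] by simp
  also have "\<dots> = c * sum F A" using assms(3) by (simp add: sum_distrib_left)
  finally show ?thesis using assms(4) by (metis mult_cancel_right1 mult.commute)
qed

lemma chars_sum_elem:
  assumes fin: "finite (carrier G)" and SG: "subgroup S G" and EG: "subgroup E G"
    and ES: "E \<subseteq> S" and comm: "comm_in G S E" and xS: "x \<in> S"
  shows "(\<Sum>h\<in>chars G S E. h x) = (if x \<in> E then of_nat (card (chars G S E)) else 0)"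
proof (cases "x \<in> E")
  case True
  then have "\<And>h. h \<in> chars G S E \<Longrightarrow> h x = 1" unfolding chars_def by auto
  then have "(\<Sum>h\<in>chars G S E. h x) = (\<Sum>h\<in>chars G S E. 1)" by (rule sum.cong[OF refl])
  then show ?thesis using True by simp
next
  case False
  have ex: "extsetup G E E S x"
    by (intro extsetup.intro extsetup_axioms.intro is_group) (use fin EG SG ES comm xS in auto)
  interpret X: extsetup G E E S x by (rule ex)
  have cX: "comm_in G S X.ET" using comm X.S_sub_T unfolding comm_in_def by blast
  have c1: "finite (chars G S X.ET) \<and> card (chars G S X.ET) * card X.ET = card S"
    by (rule chars_count[OF fin SG X.T_subgroup X.T_sub_B cX])
  have c0: "finite (chars G S E) \<and> card (chars G S E) * card E = card S"
    by (rule chars_count[OF fin SG EG ES comm])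
  have fS: "finite S" using fin SG subgroup.subset finite_subset by blast
  have "S \<noteq> {}" using subgroup.one_closed[OF SG] by blast
  then have Spos: "card S > 0" using fS by (simp add: card_gt_0_iff)
  have fET: "finite X.ET" using fS X.T_sub_B finite_subset by blast
  have "E \<subset> X.ET" using X.S_sub_T X.a_in_T False by blast
  then have lt: "card E < card X.ET" using fET psubset_card_mono by blast
  have sub: "chars G S X.ET \<subseteq> chars G S E" using X.S_sub_T unfolding chars_def by blast
  have "card (chars G S X.ET) < card (chars G S E)"
  proof (rule ccontr)
    assume "\<not> ?thesis"
    then have le: "card (chars G S E) \<le> card (chars G S X.ET)" by simp
    have "card (chars G S E) \<noteq> 0" using c0 Spos by auto
    then have "card (chars G S E) * card E < card (chars G S E) * card X.ET"
      using lt by simp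
    also have "\<dots> \<le> card (chars G S X.ET) * card X.ET" using le by (rule mult_right_mono) simp
    finally show False using c0 c1 by simp
  qed
  have "\<not> chars G S E \<subseteq> chars G S X.ET"
  proof
    assume "chars G S E \<subseteq> chars G S X.ET"
    then have "card (chars G S E) \<le> card (chars G S X.ET)" using c1 by (simp add: card_mono)
    then show False using \<open>card (chars G S X.ET) < card (chars G S E)\<close> by simp
  qed
  then obtain h0 where h0: "h0 \<in> chars G S E" "h0 \<notin> chars G S X.ET" by blast
  have h0x: "h0 x \<noteq> 1"
  proof
    assume h0x: "h0 x = 1"
    have "h0 y = 1" if yT: "y \<in> X.ET" for y
    proof -
      obtain e k where y: "e \<in> E" "y = e \<otimes> x [^] (k::nat)" using X.ET_elem[OF yT] by blast
      have "x [^] k \<in> S" using sub_pow_closed[OF SG xS] .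
      then have "h0 y = h0 e * h0 (x [^] k)" using h0(1) y ES unfolding chars_def by auto
      also have "h0 (x [^] k) = 1" using chars_pow[OF h0(1) SG subgroup.one_closed[OF EG] xS] h0x by simp
      finally show ?thesis using h0(1) y unfolding chars_def by auto
    qed
    then have "h0 \<in> chars G S X.ET" using h0(1) unfolding chars_def by auto
    then show False using h0(2) by blast
  qed
  have nz: "\<And>y. h0 y \<noteq> 0" using chars_nonzero[OF h0(1) SG subgroup.one_closed[OF EG]] .
  have bij: "bij_betw (\<lambda>h y. h y * h0 y) (chars G S E) (chars G S E)"
  proof (rule bij_betwI[where g = "\<lambda>h y. h y / h0 y"])
    show "(\<lambda>h y. h y * h0 y) \<in> chars G S E \<rightarrow> chars G S E" using chars_mult_closed h0(1) by blast
    show "(\<lambda>h y. h y / h0 y) \<in> chars G S E \<rightarrow> chars G S E" using chars_div_closed h0(1) nz by blast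
    show "(\<lambda>y. h y * h0 y / h0 y) = h" for h using nz by auto
    show "(\<lambda>y. h y / h0 y * h0 y) = h" for h using nz by auto
  qed
  have "(\<Sum>h\<in>chars G S E. h x) = 0"
    by (rule sum_shift_zero[OF _ bij _ h0x]) (use c0 in auto)
  then show ?thesis using False by simp
qed

lemma hom_sum_zero:
  assumes SG: "subgroup S G" and fS: "finite S"
    and hom: "\<And>x y. x \<in> S \<Longrightarrow> y \<in> S \<Longrightarrow> f (x \<otimes> y) = f x * f y"
    and c0: "c0 \<in> S" "f c0 \<noteq> 1"
  shows "(\<Sum>c\<in>S. f c) = (0::complex)"
proof -
  have c0c: "c0 \<in> carrier G" using subgroup.mem_carrier[OF SG c0(1)] .
  have bij: "bij_betw (\<lambda>c. c0 \<otimes> c) S S"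
  proof (rule bij_betwI[where g = "\<lambda>c. inv c0 \<otimes> c"])
    show "(\<lambda>c. c0 \<otimes> c) \<in> S \<rightarrow> S" using SG c0 by (simp add: subgroup.m_closed)
    show "(\<lambda>c. inv c0 \<otimes> c) \<in> S \<rightarrow> S" using SG c0 by (simp add: subgroup.m_closed subgroup.m_inv_closed)
    show "inv c0 \<otimes> (c0 \<otimes> x) = x" if "x \<in> S" for x
      using c0c subgroup.mem_carrier[OF SG that] by simp
    show "c0 \<otimes> (inv c0 \<otimes> x) = x" if "x \<in> S" for x
      using c0c subgroup.mem_carrier[OF SG that] by simp
  qed
  show ?thesis
    by (rule sum_shift_zero[OF fS bij _ c0(2)]) (use hom c0 in auto)
qed

end


context group begin

lemma set_multI: "p \<in> P \<Longrightarrow> q \<in> Q \<Longrightarrow> p \<otimes> q \<in> P <#> Q"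
  unfolding set_mult_def by blast

lemma set_multE: "t \<in> P <#> Q \<Longrightarrow> \<exists>p\<in>P. \<exists>q\<in>Q. t = p \<otimes> q"
  unfolding set_mult_def by blast

lemma normal_prod_subgroup:
  assumes "subgroup P G" "N \<lhd> G" shows "subgroup (P <#> N) G"
proof -
  have "second_isomorphism_grp N G P"
    unfolding second_isomorphism_grp_def second_isomorphism_grp_axioms_def using assms by auto
  then have "subgroup (N <#> P) G" by (rule second_isomorphism_grp.normal_set_mult_subgroup)
  then show ?thesis using commut_normal[OF assms] by simp
qed

lemma card_prod:
  assumes fin: "finite (carrier G)" and PG: "subgroup P G" and QG: "subgroup Q G"
  shows "card (P <#> Q) * card (P \<inter> Q) = card P * card Q"
proof -
  have Pc: "\<And>x. x \<in> P \<Longrightarrow> x \<in> carrier G" using subgroup.mem_carrier[OF PG] .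
  have Qc: "\<And>x. x \<in> Q \<Longrightarrow> x \<in> carrier G" using subgroup.mem_carrier[OF QG] .
  have fP: "finite P" using fin PG subgroup.subset finite_subset by blast
  have fQ: "finite Q" using fin QG subgroup.subset finite_subset by blast
  let ?f = "\<lambda>(p, q). p \<otimes> q"
  have img: "?f ` (P \<times> Q) = P <#> Q" unfolding set_mult_def by auto
  have fib: "card {x \<in> P \<times> Q. ?f x = t} = card (P \<inter> Q)" if t: "t \<in> ?f ` (P \<times> Q)" for t
  proof -
    obtain p0 q0 where pq0: "p0 \<in> P" "q0 \<in> Q" "t = p0 \<otimes> q0" using t by auto
    have c0: "p0 \<in> carrier G" "q0 \<in> carrier G" using pq0 Pc Qc by auto
    have eq: "{x \<in> P \<times> Q. ?f x = t} = (\<lambda>d. (p0 \<otimes> d, inv d \<otimes> q0)) ` (P \<inter> Q)"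
    proof
      show "{x \<in> P \<times> Q. ?f x = t} \<subseteq> (\<lambda>d. (p0 \<otimes> d, inv d \<otimes> q0)) ` (P \<inter> Q)"
      proof
        fix x assume "x \<in> {x \<in> P \<times> Q. ?f x = t}"
        then obtain p q where x: "x = (p, q)" and pq: "p \<in> P" "q \<in> Q" "p \<otimes> q = t" by auto
        have c: "p \<in> carrier G" "q \<in> carrier G" using pq Pc Qc by auto
        define d where "d = inv p0 \<otimes> p"
        have dP: "d \<in> P" unfolding d_def using pq0 pq PG by (simp add: subgroup.m_closed subgroup.m_inv_closed)
        have "p0 \<otimes> q0 = p \<otimes> q" using pq pq0 by simp
        then have "inv p0 \<otimes> (p0 \<otimes> q0) \<otimes> inv q = inv p0 \<otimes> (p \<otimes> q) \<otimes> inv q" by simp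
        then have dq: "d = q0 \<otimes> inv q" unfolding d_def using c c0 by (simp add: m_assoc)
        have dQ: "d \<in> Q" unfolding dq using pq0 pq QG by (simp add: subgroup.m_closed subgroup.m_inv_closed)
        have "p = p0 \<otimes> d" unfolding d_def using c c0 by simp
        moreover have "q = inv d \<otimes> q0" unfolding dq using c c0 by (simp add: inv_mult_group m_assoc)
        ultimately show "x \<in> (\<lambda>d. (p0 \<otimes> d, inv d \<otimes> q0)) ` (P \<inter> Q)" using dP dQ x by blast
      qed
      show "(\<lambda>d. (p0 \<otimes> d, inv d \<otimes> q0)) ` (P \<inter> Q) \<subseteq> {x \<in> P \<times> Q. ?f x = t}"
      proof
        fix x assume "x \<in> (\<lambda>d. (p0 \<otimes> d, inv d \<otimes> q0)) ` (P \<inter> Q)"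
        then obtain d where x: "x = (p0 \<otimes> d, inv d \<otimes> q0)" and d: "d \<in> P" "d \<in> Q" by auto
        have dc: "d \<in> carrier G" using d Pc by auto
        have "p0 \<otimes> d \<in> P" using d pq0 PG by (simp add: subgroup.m_closed)
        moreover have "inv d \<otimes> q0 \<in> Q" using d pq0 QG by (simp add: subgroup.m_closed subgroup.m_inv_closed)
        moreover have "p0 \<otimes> d \<otimes> (inv d \<otimes> q0) = t" using dc c0 pq0 by (simp add: m_assoc)
        ultimately show "x \<in> {x \<in> P \<times> Q. ?f x = t}" using x by simp
      qed
    qed
    have "inj_on (\<lambda>d. (p0 \<otimes> d, inv d \<otimes> q0)) (P \<inter> Q)"
    proof (rule inj_onI)
      fix x y assume xy: "x \<in> P \<inter> Q" "y \<in> P \<inter> Q" "(p0 \<otimes> x, inv x \<otimes> q0) = (p0 \<otimes> y, inv y \<otimes> q0)"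
      then have "inv p0 \<otimes> (p0 \<otimes> x) = inv p0 \<otimes> (p0 \<otimes> y)" by simp
      then show "x = y" using c0 Pc xy by simp
    qed
    then show ?thesis unfolding eq by (simp add: card_image)
  qed
  have "card (P \<times> Q) = card (?f ` (P \<times> Q)) * card (P \<inter> Q)"
    by (rule card_fibers[OF _ fib]) (use fP fQ in auto)
  then show ?thesis unfolding img by (simp add: card_cartesian_product)
qed

end

locale stepsetup = group G for G (structure) +
  fixes L B
  assumes fin: "finite (carrier G)" and LG: "subgroup L G" and BN: "B \<lhd> G"
    and commBL: "comm_in G B L"
begin

definition DD :: "'a set" where "DD = B \<inter> L"
definition XX :: "('a \<Rightarrow> complex) set" where "XX = chars G B DD"
definition cact :: "'a \<Rightarrow> ('a \<Rightarrow> complex) \<Rightarrow> ('a \<Rightarrow> complex)" where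
  "cact l f = (\<lambda>c. if c \<in> B then f (inv l \<otimes> c \<otimes> l) else 1)"
definition stab :: "('a \<Rightarrow> complex) \<Rightarrow> 'a set" where "stab f = {l \<in> L. cact l f = f}"
definition Tc :: "('a \<Rightarrow> complex) \<Rightarrow> 'a set" where "Tc f = stab f <#> B"
definition hat :: "('a \<Rightarrow> complex) \<Rightarrow> 'a \<Rightarrow> complex" where
  "hat f t = f (SOME b. b \<in> B \<and> (\<exists>l\<in>stab f. t = l \<otimes> b))"
definition MM :: "'a set" where "MM = L <#> B"

lemma BG: "subgroup B G" using BN normal_imp_subgroup by blast
lemma Bc: "x \<in> B \<Longrightarrow> x \<in> carrier G" by (rule subgroup.mem_carrier[OF BG])
lemma Lc: "x \<in> L \<Longrightarrow> x \<in> carrier G" by (rule subgroup.mem_carrier[OF LG])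
lemma DG: "subgroup DD G" unfolding DD_def using subgroups_Inter_pair BG LG by blast
lemma DB: "DD \<subseteq> B" unfolding DD_def by blast
lemma DL: "DD \<subseteq> L" unfolding DD_def by blast
lemma one_D: "\<one> \<in> DD" using subgroup.one_closed[OF DG] .
lemma fB: "finite B" using fin BG subgroup.subset finite_subset by blast
lemma fL: "finite L" using fin LG subgroup.subset finite_subset by blast
lemma fD: "finite DD" using fB DB finite_subset by blast

lemma commBD: "comm_in G B DD"
  unfolding comm_in_def DD_def
proof (intro ballI IntI)
  fix x y assume "x \<in> B" "y \<in> B"
  then show "x \<otimes> y \<otimes> inv x \<otimes> inv y \<in> B" using BG by (simp add: subgroup.m_closed subgroup.m_inv_closed)
  show "x \<otimes> y \<otimes> inv x \<otimes> inv y \<in> L" using commBL \<open>x \<in> B\<close> \<open>y \<in> B\<close> by (rule comm_inE)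
qed

lemma conjB: "l \<in> carrier G \<Longrightarrow> b \<in> B \<Longrightarrow> inv l \<otimes> b \<otimes> l \<in> B"
  using normal.inv_op_closed1[OF BN] by blast
lemma conjB2: "l \<in> carrier G \<Longrightarrow> b \<in> B \<Longrightarrow> l \<otimes> b \<otimes> inv l \<in> B"
  using normal.inv_op_closed2[OF BN] by blast

lemma conjD: assumes "l \<in> L" "d \<in> DD" shows "inv l \<otimes> d \<otimes> l \<in> DD"
proof -
  have "inv l \<otimes> d \<otimes> l \<in> B" using conjB Lc assms DB by blast
  moreover have "inv l \<otimes> d \<otimes> l \<in> L" using assms DL LG by (auto simp: subgroup.m_closed subgroup.m_inv_closed)
  ultimately show ?thesis unfolding DD_def by blast
qed

lemma X_count: "finite XX" "card XX * card DD = card B"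
  using chars_count[OF fin BG DG DB commBD] unfolding XX_def by auto

lemma X_sum: "x \<in> B \<Longrightarrow> (\<Sum>f\<in>XX. f x) = (if x \<in> DD then of_nat (card XX) else 0)"
  using chars_sum_elem[OF fin BG DG DB commBD] unfolding XX_def by blast

lemma Xmult: "f \<in> XX \<Longrightarrow> x \<in> B \<Longrightarrow> y \<in> B \<Longrightarrow> f (x \<otimes> y) = f x * f y"
  unfolding XX_def chars_def by blast
lemma XD: "f \<in> XX \<Longrightarrow> d \<in> DD \<Longrightarrow> f d = 1"
  unfolding XX_def chars_def by blast
lemma Xout: "f \<in> XX \<Longrightarrow> x \<notin> B \<Longrightarrow> f x = 1"
  unfolding XX_def chars_def by blast
lemma Xnz: "f \<in> XX \<Longrightarrow> f x \<noteq> 0"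
  using chars_nonzero[OF _ BG one_D] unfolding XX_def by blast
lemma Xinv: "f \<in> XX \<Longrightarrow> x \<in> B \<Longrightarrow> f (inv x) = 1 / f x"
  using chars_inv[OF _ BG one_D] unfolding XX_def by blast

lemma cact_X: assumes f: "f \<in> XX" and l: "l \<in> L" shows "cact l f \<in> XX"
  unfolding XX_def chars_def
proof (intro CollectI conjI ballI allI impI)
  have lc: "l \<in> carrier G" using Lc l .
  fix x y assume xy: "x \<in> B" "y \<in> B"
  have "inv l \<otimes> (x \<otimes> y) \<otimes> l = (inv l \<otimes> x \<otimes> l) \<otimes> (inv l \<otimes> y \<otimes> l)"
    using lc xy Bc by (simp add: m_assoc)
  then show "cact l f (x \<otimes> y) = cact l f x * cact l f y"
    unfolding cact_def using xy f conjB[OF lc] BG by (simp add: subgroup.m_closed Xmult)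
next
  fix x assume "x \<in> DD"
  then show "cact l f x = 1" unfolding cact_def using DB conjD[OF l] XD[OF f] by auto
next
  fix x assume "x \<notin> B" then show "cact l f x = 1" unfolding cact_def by simp
qed

lemma cact_mult:
  assumes "l1 \<in> carrier G" "l2 \<in> carrier G"
  shows "cact (l1 \<otimes> l2) f = cact l1 (cact l2 f)"
proof
  fix c show "cact (l1 \<otimes> l2) f c = cact l1 (cact l2 f) c"
  proof (cases "c \<in> B")
    case True
    have "inv (l1 \<otimes> l2) \<otimes> c \<otimes> (l1 \<otimes> l2) = inv l2 \<otimes> (inv l1 \<otimes> c \<otimes> l1) \<otimes> l2"
      using assms Bc[OF True] by (simp add: inv_mult_group m_assoc)
    then show ?thesis unfolding cact_def using True conjB[OF assms(1)] by simp
  qed (simp add: cact_def)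
qed

lemma cact_one: assumes f: "f \<in> XX" shows "cact \<one> f = f"
proof
  fix c show "cact \<one> f c = f c"
    by (cases "c \<in> B") (simp_all add: cact_def Bc Xout[OF f])
qed

lemma stab_sub: "stab f \<subseteq> L" unfolding stab_def by blast

lemma stab_subgroup: assumes f: "f \<in> XX" shows "subgroup (stab f) G"
proof (rule subgroupI)
  show "stab f \<subseteq> carrier G" using stab_sub Lc by blast
  have "\<one> \<in> stab f" unfolding stab_def using subgroup.one_closed[OF LG] cact_one[OF f] by simp
  then show "stab f \<noteq> {}" by blast
next
  fix l assume l: "l \<in> stab f"
  then have ll: "l \<in> L" "cact l f = f" unfolding stab_def by auto
  have lc: "l \<in> carrier G" using Lc ll(1) .
  have "cact (inv l) f = cact (inv l) (cact l f)" using ll by simp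
  also have "\<dots> = cact (inv l \<otimes> l) f" by (simp only: cact_mult[OF inv_closed[OF lc] lc])
  also have "\<dots> = f" using lc cact_one[OF f] by simp
  finally show "inv l \<in> stab f" unfolding stab_def using ll LG by (simp add: subgroup.m_inv_closed)
next
  fix l1 l2 assume "l1 \<in> stab f" "l2 \<in> stab f"
  then have ll: "l1 \<in> L" "cact l1 f = f" "l2 \<in> L" "cact l2 f = f" unfolding stab_def by auto
  have "cact (l1 \<otimes> l2) f = f" using cact_mult Lc ll by simp
  then show "l1 \<otimes> l2 \<in> stab f" unfolding stab_def using ll LG by (simp add: subgroup.m_closed)
qed

lemma D_stab: assumes f: "f \<in> XX" shows "DD \<subseteq> stab f"
proof
  fix d assume d: "d \<in> DD"
  have dc: "d \<in> carrier G" using d DB Bc by blast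
  have "cact d f = f"
  proof
    fix c show "cact d f c = f c"
    proof (cases "c \<in> B")
      case True
      have cc: "c \<in> carrier G" using Bc True .
      have dB: "d \<in> B" using d DB by blast
      have "inv d \<in> B" using subgroup.m_inv_closed[OF BG dB] .
      then have k: "inv d \<otimes> c \<otimes> inv (inv d) \<otimes> inv c \<in> DD" by (rule comm_inE[OF commBD _ True])
      have "inv d \<otimes> c \<otimes> d = (inv d \<otimes> c \<otimes> inv (inv d) \<otimes> inv c) \<otimes> c"
        using dc cc by (simp add: m_assoc)
      moreover have "inv d \<otimes> c \<otimes> inv (inv d) \<otimes> inv c \<in> B" using k DB by blast
      ultimately have "f (inv d \<otimes> c \<otimes> d) = f (inv d \<otimes> c \<otimes> inv (inv d) \<otimes> inv c) * f c"
        using Xmult[OF f] True by simp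
      then show ?thesis unfolding cact_def using True XD[OF f k] by simp
    qed (simp add: cact_def Xout[OF f])
  qed
  then show "d \<in> stab f" unfolding stab_def using d DL by blast
qed

lemma stab_B: assumes f: "f \<in> XX" shows "stab f \<inter> B = DD"
  using D_stab[OF f] stab_sub DB unfolding DD_def by blast

lemma Tc_subgroup: "f \<in> XX \<Longrightarrow> subgroup (Tc f) G"
  unfolding Tc_def using normal_prod_subgroup[OF stab_subgroup BN] .

lemma M_subgroup: "subgroup MM G"
  unfolding MM_def using normal_prod_subgroup[OF LG BN] .

lemma Tc_card: assumes f: "f \<in> XX" shows "card (Tc f) * card DD = card (stab f) * card B"
  using card_prod[OF fin stab_subgroup[OF f] BG] stab_B[OF f] unfolding Tc_def by simp

lemma L_M: "L \<subseteq> MM"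
proof
  fix x assume x: "x \<in> L"
  have "x \<otimes> \<one> \<in> MM" unfolding MM_def using set_multI[OF x subgroup.one_closed[OF BG]] .
  then show "x \<in> MM" using Lc[OF x] by simp
qed
lemma B_M: "B \<subseteq> MM"
proof
  fix x assume x: "x \<in> B"
  have "\<one> \<otimes> x \<in> MM" unfolding MM_def using set_multI[OF subgroup.one_closed[OF LG] x] .
  then show "x \<in> MM" using Bc[OF x] by simp
qed
lemma Tc_M: "Tc f \<subseteq> MM" unfolding Tc_def MM_def using stab_sub mono_set_mult by blast


lemma Tc_char:
  assumes f: "f \<in> XX" and l: "l \<in> L" and b: "b \<in> B"
  shows "l \<otimes> b \<in> Tc f \<longleftrightarrow> l \<in> stab f"
proof
  assume "l \<in> stab f" then show "l \<otimes> b \<in> Tc f" unfolding Tc_def using set_multI b by blast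
next
  assume "l \<otimes> b \<in> Tc f"
  then obtain l0 b0 where lb: "l0 \<in> stab f" "b0 \<in> B" "l \<otimes> b = l0 \<otimes> b0"
    unfolding Tc_def using set_multE by blast
  have l0L: "l0 \<in> L" using lb stab_sub by blast
  have c: "l \<in> carrier G" "b \<in> carrier G" "l0 \<in> carrier G" "b0 \<in> carrier G" using l b l0L lb Lc Bc by auto
  define d where "d = inv l0 \<otimes> l"
  have "inv l0 \<otimes> (l \<otimes> b) = inv l0 \<otimes> (l0 \<otimes> b0)" using lb by simp
  then have "d \<otimes> b = b0" unfolding d_def using c by (simp add: m_assoc)
  then have "d = b0 \<otimes> inv b" using c unfolding d_def by (metis inv_closed m_closed r_inv r_one m_assoc)
  then have "d \<in> B" using lb b BG by (simp add: subgroup.m_closed subgroup.m_inv_closed)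
  moreover have "d \<in> L" unfolding d_def using l l0L LG by (simp add: subgroup.m_closed subgroup.m_inv_closed)
  ultimately have "d \<in> stab f" using D_stab[OF f] unfolding DD_def by blast
  then have "l0 \<otimes> d \<in> stab f" using lb stab_subgroup[OF f] by (simp add: subgroup.m_closed)
  moreover have "l0 \<otimes> d = l" unfolding d_def using c by simp
  ultimately show "l \<in> stab f" by simp
qed

lemma hat_val:
  assumes f: "f \<in> XX" and l: "l \<in> stab f" and b: "b \<in> B"
  shows "hat f (l \<otimes> b) = f b"
proof -
  let ?P = "\<lambda>b0. b0 \<in> B \<and> (\<exists>l0\<in>stab f. l \<otimes> b = l0 \<otimes> b0)"
  have "?P b" using l b by blast
  then have P: "?P (SOME b0. ?P b0)" by (rule someI)
  define b0 where "b0 = (SOME b0. ?P b0)"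
  obtain l0 where lb: "l0 \<in> stab f" "b0 \<in> B" "l \<otimes> b = l0 \<otimes> b0" using P unfolding b0_def by blast
  have lL: "l \<in> L" using l stab_sub by blast
  have l0L: "l0 \<in> L" using lb stab_sub by blast
  have c: "l \<in> carrier G" "b \<in> carrier G" "l0 \<in> carrier G" "b0 \<in> carrier G" using lL b l0L lb Lc Bc by auto
  define d where "d = inv l0 \<otimes> l"
  have "inv l0 \<otimes> (l \<otimes> b) = inv l0 \<otimes> (l0 \<otimes> b0)" using lb by simp
  then have db: "d \<otimes> b = b0" unfolding d_def using c by (simp add: m_assoc)
  then have "d = b0 \<otimes> inv b" using c unfolding d_def by (metis inv_closed m_closed r_inv r_one m_assoc)
  then have dB: "d \<in> B" using lb b BG by (simp add: subgroup.m_closed subgroup.m_inv_closed)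
  moreover have "d \<in> L" unfolding d_def using lL l0L LG by (simp add: subgroup.m_closed subgroup.m_inv_closed)
  ultimately have dD: "d \<in> DD" unfolding DD_def by blast
  have "hat f (l \<otimes> b) = f b0" unfolding hat_def b0_def by simp
  also have "\<dots> = f d * f b" using db Xmult[OF f dB b] by simp
  also have "\<dots> = f b" using XD[OF f dD] by simp
  finally show ?thesis .
qed

lemma hat_linear: assumes f: "f \<in> XX" shows "linear_char G (Tc f) (hat f)"
  unfolding linear_char_def
proof (intro conjI ballI)
  fix x assume "x \<in> Tc f"
  then obtain l b where lb: "l \<in> stab f" "b \<in> B" "x = l \<otimes> b" unfolding Tc_def using set_multE by blast
  show "hat f x \<noteq> 0" using hat_val[OF f lb(1,2)] lb(3) Xnz[OF f] by simp
next
  fix x y assume "x \<in> Tc f" "y \<in> Tc f"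
  then obtain l1 b1 l2 b2 where lb: "l1 \<in> stab f" "b1 \<in> B" "x = l1 \<otimes> b1"
    "l2 \<in> stab f" "b2 \<in> B" "y = l2 \<otimes> b2" unfolding Tc_def using set_multE by metis
  have c: "l1 \<in> carrier G" "b1 \<in> carrier G" "l2 \<in> carrier G" "b2 \<in> carrier G"
    using lb stab_sub Lc Bc by auto
  have e: "x \<otimes> y = (l1 \<otimes> l2) \<otimes> ((inv l2 \<otimes> b1 \<otimes> l2) \<otimes> b2)" using lb c by (simp add: m_assoc)
  have cb: "inv l2 \<otimes> b1 \<otimes> l2 \<in> B" using conjB c lb by blast
  have "l1 \<otimes> l2 \<in> stab f" using lb stab_subgroup[OF f] by (simp add: subgroup.m_closed)
  moreover have "(inv l2 \<otimes> b1 \<otimes> l2) \<otimes> b2 \<in> B" using cb lb BG by (simp add: subgroup.m_closed)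
  ultimately have "hat f (x \<otimes> y) = f ((inv l2 \<otimes> b1 \<otimes> l2) \<otimes> b2)" using e hat_val[OF f] by simp
  also have "\<dots> = f (inv l2 \<otimes> b1 \<otimes> l2) * f b2" using Xmult[OF f cb lb(5)] .
  also have "f (inv l2 \<otimes> b1 \<otimes> l2) = cact l2 f b1" unfolding cact_def using lb by simp
  also have "cact l2 f = f" using lb unfolding stab_def by blast
  finally show "hat f (x \<otimes> y) = hat f x * hat f y" using hat_val[OF f] lb by simp
qed


definition fnL :: "'a \<Rightarrow> complex" where "fnL w = (if w \<in> L then 1 else 0)"
definition fnT :: "('a \<Rightarrow> complex) \<Rightarrow> 'a \<Rightarrow> complex" where
  "fnT f w = (if w \<in> Tc f then hat f w else 0)"
definition AA :: "'a \<Rightarrow> complex" where "AA w = (\<Sum>c\<in>B. fnL (c \<otimes> w \<otimes> inv c))"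
definition BBf :: "('a \<Rightarrow> complex) \<Rightarrow> 'a \<Rightarrow> complex" where
  "BBf f w = (\<Sum>c\<in>B. fnT f (c \<otimes> w \<otimes> inv c))"

lemma nu_sum:
  assumes f: "f \<in> XX" and l: "l \<in> L"
  shows "(\<Sum>c\<in>B. f (inv l \<otimes> c \<otimes> l) * f (inv c)) = (if l \<in> stab f then of_nat (card B) else 0)"
proof (cases "l \<in> stab f")
  case True
  then have cl: "cact l f = f" unfolding stab_def by blast
  have "f (inv l \<otimes> c \<otimes> l) * f (inv c) = 1" if c: "c \<in> B" for c
  proof -
    have "f (inv l \<otimes> c \<otimes> l) = cact l f c" unfolding cact_def using c by simp
    then have "f (inv l \<otimes> c \<otimes> l) = f c" using cl by simp
    then show ?thesis using Xinv[OF f c] Xnz[OF f, of c] by simp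
  qed
  then have "(\<Sum>c\<in>B. f (inv l \<otimes> c \<otimes> l) * f (inv c)) = (\<Sum>c\<in>B. 1)" by (rule sum.cong[OF refl])
  then show ?thesis using True by simp
next
  case False
  have lc: "l \<in> carrier G" using Lc l .
  have "\<exists>c0\<in>B. f (inv l \<otimes> c0 \<otimes> l) * f (inv c0) \<noteq> 1"
  proof (rule ccontr)
    assume "\<not> ?thesis"
    then have h: "\<And>c. c \<in> B \<Longrightarrow> f (inv l \<otimes> c \<otimes> l) * f (inv c) = 1" by blast
    have "cact l f = f"
    proof
      fix c show "cact l f c = f c"
      proof (cases "c \<in> B")
        case True
        have "f (inv l \<otimes> c \<otimes> l) * (1 / f c) = 1" using h[OF True] Xinv[OF f True] by simp
        then have "f (inv l \<otimes> c \<otimes> l) = f c" using Xnz[OF f, of c] by (simp add: field_simps)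
        then show ?thesis unfolding cact_def using True by simp
      qed (simp add: cact_def Xout[OF f])
    qed
    then show False using False l unfolding stab_def by blast
  qed
  then obtain c0 where c0: "c0 \<in> B" "f (inv l \<otimes> c0 \<otimes> l) * f (inv c0) \<noteq> 1" by blast
  have hom: "f (inv l \<otimes> (x \<otimes> y) \<otimes> l) * f (inv (x \<otimes> y)) =
      f (inv l \<otimes> x \<otimes> l) * f (inv x) * (f (inv l \<otimes> y \<otimes> l) * f (inv y))"
    if xy: "x \<in> B" "y \<in> B" for x y
  proof -
    have xc: "x \<in> carrier G" "y \<in> carrier G" using xy Bc by auto
    have e1: "inv l \<otimes> (x \<otimes> y) \<otimes> l = (inv l \<otimes> x \<otimes> l) \<otimes> (inv l \<otimes> y \<otimes> l)"
      using lc xc by (simp add: m_assoc)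
    have e2: "inv (x \<otimes> y) = inv y \<otimes> inv x" using xc by (simp add: inv_mult_group)
    have ib: "inv x \<in> B" "inv y \<in> B" using xy BG by (auto simp: subgroup.m_inv_closed)
    show ?thesis unfolding e1 e2 using Xmult[OF f conjB[OF lc xy(1)] conjB[OF lc xy(2)]] Xmult[OF f ib(2) ib(1)]
      by simp
  qed
  have "(\<Sum>c\<in>B. f (inv l \<otimes> c \<otimes> l) * f (inv c)) = 0"
    by (rule hom_sum_zero[where f = "\<lambda>c. f (inv l \<otimes> c \<otimes> l) * f (inv c)", OF BG fB _ c0]) (use hom in auto)
  then show ?thesis using False by simp
qed

lemma core:
  assumes w: "w \<in> carrier G"
  shows "of_nat (card B) * AA w = of_nat (card DD) * (\<Sum>f\<in>XX. BBf f w)"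
proof (cases "w \<in> MM")
  case False
  have out: "c \<otimes> w \<otimes> inv c \<notin> MM" if c: "c \<in> B" for c
  proof
    assume "c \<otimes> w \<otimes> inv c \<in> MM"
    moreover have "c \<in> MM" "inv c \<in> MM" using c B_M subgroup.m_inv_closed[OF BG c] by auto
    ultimately have "inv c \<otimes> (c \<otimes> w \<otimes> inv c) \<otimes> c \<in> MM" using M_subgroup by (simp add: subgroup.m_closed)
    moreover have "inv c \<otimes> (c \<otimes> w \<otimes> inv c) \<otimes> c = w" using w Bc[OF c] by (simp add: m_assoc)
    ultimately show False using False by simp
  qed
  have "AA w = 0" unfolding AA_def fnL_def using out L_M by (intro sum.neutral) auto
  moreover have "BBf f w = 0" for f unfolding BBf_def fnT_def using out Tc_M by (intro sum.neutral) auto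
  ultimately show ?thesis by simp
next
  case True
  then obtain l b where lb: "l \<in> L" "b \<in> B" "w = l \<otimes> b" unfolding MM_def using set_multE by blast
  have lc: "l \<in> carrier G" and bc: "b \<in> carrier G" using lb Lc Bc by auto
  define beta where "beta c = inv l \<otimes> c \<otimes> l \<otimes> b \<otimes> inv c" for c
  have beta_B: "beta c \<in> B" if c: "c \<in> B" for c
  proof -
    have "inv l \<otimes> c \<otimes> l \<in> B" using conjB[OF lc c] .
    then show ?thesis unfolding beta_def using lb c BG by (simp add: subgroup.m_closed subgroup.m_inv_closed)
  qed
  have conj: "c \<otimes> w \<otimes> inv c = l \<otimes> beta c" if c: "c \<in> B" for c
    unfolding beta_def using lb lc bc Bc[OF c] by (simp add: m_assoc)
  have fnL_b: "fnL (c \<otimes> w \<otimes> inv c) = (if beta c \<in> DD then 1 else 0)" if c: "c \<in> B" for c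
  proof -
    have bc': "beta c \<in> carrier G" using Bc beta_B c by blast
    have "l \<otimes> beta c \<in> L \<longleftrightarrow> beta c \<in> L"
    proof
      assume "l \<otimes> beta c \<in> L"
      then have "inv l \<otimes> (l \<otimes> beta c) \<in> L" using lb LG by (simp add: subgroup.m_closed subgroup.m_inv_closed)
      then show "beta c \<in> L" using lc bc' by simp
    next
      assume "beta c \<in> L" then show "l \<otimes> beta c \<in> L" using lb LG by (simp add: subgroup.m_closed)
    qed
    then show ?thesis unfolding fnL_def conj[OF c] DD_def using beta_B[OF c] by auto
  qed
  have fbeta: "f (beta c) = f b * (f (inv l \<otimes> c \<otimes> l) * f (inv c))" if f: "f \<in> XX" and c: "c \<in> B" for f c
  proof -
    have cb: "inv l \<otimes> c \<otimes> l \<in> B" using conjB[OF lc c] .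
    have cbb: "inv l \<otimes> c \<otimes> l \<otimes> b \<in> B" using cb lb BG by (simp add: subgroup.m_closed)
    have ic: "inv c \<in> B" using c BG by (simp add: subgroup.m_inv_closed)
    have "f (beta c) = f (inv l \<otimes> c \<otimes> l \<otimes> b) * f (inv c)" unfolding beta_def using Xmult[OF f cbb ic] .
    also have "\<dots> = f (inv l \<otimes> c \<otimes> l) * f b * f (inv c)" using Xmult[OF f cb lb(2)] by simp
    finally show ?thesis by simp
  qed
  have fnT_b: "fnT f (c \<otimes> w \<otimes> inv c) = (if l \<in> stab f then f b else 0)" if f: "f \<in> XX" and c: "c \<in> B" for f c
  proof (cases "l \<in> stab f")
    case True
    have "cact l f = f" using True unfolding stab_def by blast
    then have "f (inv l \<otimes> c \<otimes> l) = f c" using fun_cong[of "cact l f" f c] c unfolding cact_def by simp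
    then have "f (inv l \<otimes> c \<otimes> l) * f (inv c) = 1" using Xinv[OF f c] Xnz[OF f, of c] by simp
    then have "f (beta c) = f b" using fbeta[OF f c] by simp
    moreover have "l \<otimes> beta c \<in> Tc f" using Tc_char[OF f lb(1) beta_B[OF c]] True by simp
    ultimately show ?thesis unfolding fnT_def conj[OF c] using hat_val[OF f True beta_B[OF c]] True by simp
  next
    case False
    then have "l \<otimes> beta c \<notin> Tc f" using Tc_char[OF f lb(1) beta_B[OF c]] by simp
    then show ?thesis unfolding fnT_def conj[OF c] using False by simp
  qed
  define Q where "Q = (\<Sum>f\<in>XX. if l \<in> stab f then f b else 0)"
  have BB: "BBf f w = of_nat (card B) * (if l \<in> stab f then f b else 0)" if f: "f \<in> XX" for f
  proof -
    have "BBf f w = (\<Sum>c\<in>B. (if l \<in> stab f then f b else 0))"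
      unfolding BBf_def using fnT_b[OF f] by (rule sum.cong[OF refl])
    then show ?thesis by simp
  qed
  have sumB: "(\<Sum>f\<in>XX. BBf f w) = of_nat (card B) * Q"
    unfolding Q_def sum_distrib_left using BB by (rule sum.cong[OF refl])
  have "of_nat (card XX) * AA w = (\<Sum>c\<in>B. of_nat (card XX) * (if beta c \<in> DD then 1 else 0))"
    unfolding AA_def sum_distrib_left using fnL_b by (intro sum.cong) auto
  also have "\<dots> = (\<Sum>c\<in>B. \<Sum>f\<in>XX. f (beta c))"
    using X_sum beta_B by (intro sum.cong) auto
  also have "\<dots> = (\<Sum>f\<in>XX. \<Sum>c\<in>B. f (beta c))" by (rule sum.swap)
  also have "\<dots> = (\<Sum>f\<in>XX. f b * (\<Sum>c\<in>B. f (inv l \<otimes> c \<otimes> l) * f (inv c)))"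
    using fbeta by (simp add: sum_distrib_left)
  also have "\<dots> = (\<Sum>f\<in>XX. f b * (if l \<in> stab f then of_nat (card B) else 0))"
    using nu_sum lb(1) by simp
  also have "\<dots> = of_nat (card B) * Q" unfolding Q_def sum_distrib_left by (intro sum.cong) auto
  finally have eqA: "of_nat (card XX) * AA w = of_nat (card B) * Q" .
  have "of_nat (card B) * AA w = of_nat (card DD) * (of_nat (card XX) * AA w)"
    using X_count(2) by (metis mult.assoc mult.commute of_nat_mult)
  also have "\<dots> = of_nat (card DD) * (\<Sum>f\<in>XX. BBf f w)" using eqA sumB by simp
  finally show ?thesis .
qed


lemma reindexB:
  fixes F :: "'a \<Rightarrow> complex"
  assumes g: "g \<in> carrier G"
  shows "of_nat (card B) * (\<Sum>x\<in>carrier G. F (x \<otimes> g \<otimes> inv x)) =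
    (\<Sum>x\<in>carrier G. \<Sum>c\<in>B. F (c \<otimes> (x \<otimes> g \<otimes> inv x) \<otimes> inv c))"
proof -
  have inner: "(\<Sum>x\<in>carrier G. F (c \<otimes> (x \<otimes> g \<otimes> inv x) \<otimes> inv c)) = (\<Sum>x\<in>carrier G. F (x \<otimes> g \<otimes> inv x))"
    if c: "c \<in> B" for c
  proof -
    have cc: "c \<in> carrier G" using Bc c .
    have bij: "bij_betw (\<lambda>x. c \<otimes> x) (carrier G) (carrier G)"
    proof (rule bij_betwI[where g = "\<lambda>x. inv c \<otimes> x"])
      show "(\<lambda>x. c \<otimes> x) \<in> carrier G \<rightarrow> carrier G" using cc by simp
      show "(\<lambda>x. inv c \<otimes> x) \<in> carrier G \<rightarrow> carrier G" using cc by simp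
      show "inv c \<otimes> (c \<otimes> x) = x" if "x \<in> carrier G" for x using cc that by simp
      show "c \<otimes> (inv c \<otimes> x) = x" if "x \<in> carrier G" for x using cc that by simp
    qed
    have "(\<Sum>x\<in>carrier G. F (c \<otimes> (x \<otimes> g \<otimes> inv x) \<otimes> inv c)) =
        (\<Sum>x\<in>carrier G. (\<lambda>y. F (y \<otimes> g \<otimes> inv y)) (c \<otimes> x))"
    proof (rule sum.cong[OF refl])
      fix x assume x: "x \<in> carrier G"
      have "c \<otimes> (x \<otimes> g \<otimes> inv x) \<otimes> inv c = (c \<otimes> x) \<otimes> g \<otimes> inv (c \<otimes> x)"
        using cc x g by (simp add: m_assoc inv_mult_group)
      then show "F (c \<otimes> (x \<otimes> g \<otimes> inv x) \<otimes> inv c) = (\<lambda>y. F (y \<otimes> g \<otimes> inv y)) (c \<otimes> x)" by simp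
    qed
    also have "\<dots> = (\<Sum>x\<in>carrier G. F (x \<otimes> g \<otimes> inv x))"
      using sum.reindex_bij_betw[OF bij, of "\<lambda>y. F (y \<otimes> g \<otimes> inv y)"] by simp
    finally show ?thesis .
  qed
  have "(\<Sum>x\<in>carrier G. \<Sum>c\<in>B. F (c \<otimes> (x \<otimes> g \<otimes> inv x) \<otimes> inv c)) =
      (\<Sum>c\<in>B. \<Sum>x\<in>carrier G. F (c \<otimes> (x \<otimes> g \<otimes> inv x) \<otimes> inv c))" by (rule sum.swap)
  also have "\<dots> = (\<Sum>c\<in>B. \<Sum>x\<in>carrier G. F (x \<otimes> g \<otimes> inv x))" using inner by (rule sum.cong[OF refl])
  finally show ?thesis by simp
qed

lemma card_pos: "card L > 0" "card B > 0" "card DD > 0"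
  using fL fB fD subgroup.one_closed[OF LG] subgroup.one_closed[OF BG] one_D by (auto simp: card_gt_0_iff)

lemma Tc_card_pos: "f \<in> XX \<Longrightarrow> card (Tc f) > 0"
  using Tc_subgroup[of f] fin subgroup.subset finite_subset subgroup.one_closed
  by (metis card_gt_0_iff empty_iff)

lemma ind_decomp:
  assumes g: "g \<in> carrier G"
  shows "induced G L trivial_char g =
    (\<Sum>f\<in>XX. (of_nat (card (stab f)) / of_nat (card L)) * induced G (Tc f) (hat f) g)"
proof -
  define SL where "SL = (\<Sum>x\<in>carrier G. fnL (x \<otimes> g \<otimes> inv x))"
  define Sf where "Sf f = (\<Sum>x\<in>carrier G. fnT f (x \<otimes> g \<otimes> inv x))" for f
  have wc: "x \<otimes> g \<otimes> inv x \<in> carrier G" if "x \<in> carrier G" for x using that g by simp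
  have indL: "induced G L trivial_char g = SL / of_nat (card L)"
    unfolding induced_def SL_def fnL_def trivial_char_def by simp
  have indT: "induced G (Tc f) (hat f) g = Sf f / of_nat (card (Tc f))" for f
    unfolding induced_def Sf_def fnT_def by simp
  have "of_nat (card B) * (of_nat (card B) * SL) = of_nat (card B) * (\<Sum>x\<in>carrier G. AA (x \<otimes> g \<otimes> inv x))"
    unfolding SL_def AA_def using reindexB[OF g, of fnL] by simp
  also have "\<dots> = (\<Sum>x\<in>carrier G. of_nat (card B) * AA (x \<otimes> g \<otimes> inv x))" by (simp add: sum_distrib_left)
  also have "\<dots> = (\<Sum>x\<in>carrier G. of_nat (card DD) * (\<Sum>f\<in>XX. BBf f (x \<otimes> g \<otimes> inv x)))"
    using core wc by (intro sum.cong) auto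
  also have "\<dots> = of_nat (card DD) * (\<Sum>f\<in>XX. \<Sum>x\<in>carrier G. BBf f (x \<otimes> g \<otimes> inv x))"
    by (simp add: sum_distrib_left sum.swap[of _ XX])
  also have "\<dots> = of_nat (card DD) * (\<Sum>f\<in>XX. of_nat (card B) * Sf f)"
    unfolding Sf_def BBf_def using reindexB[OF g] by simp
  finally have "of_nat (card B) * (of_nat (card B) * SL) = of_nat (card B) * (of_nat (card DD) * (\<Sum>f\<in>XX. Sf f))"
    by (simp add: sum_distrib_left mult_ac)
  then have key: "of_nat (card B) * SL = of_nat (card DD) * (\<Sum>f\<in>XX. Sf f)" using card_pos by simp
  have coef: "(of_nat (card (stab f)) / of_nat (card L)) * (Sf f / of_nat (card (Tc f))) =
      of_nat (card DD) / (of_nat (card B) * of_nat (card L)) * Sf f" if f: "f \<in> XX" for f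
  proof -
    have "of_nat (card (Tc f)) * of_nat (card DD) = (of_nat (card (stab f)) * of_nat (card B) :: complex)"
      using Tc_card[OF f] by (metis of_nat_mult)
    then show ?thesis using card_pos Tc_card_pos[OF f] by (simp add: field_simps)
  qed
  have "(\<Sum>f\<in>XX. (of_nat (card (stab f)) / of_nat (card L)) * induced G (Tc f) (hat f) g) =
      (\<Sum>f\<in>XX. of_nat (card DD) / (of_nat (card B) * of_nat (card L)) * Sf f)"
    unfolding indT using coef by (rule sum.cong[OF refl])
  also have "\<dots> = of_nat (card DD) * (\<Sum>f\<in>XX. Sf f) / (of_nat (card B) * of_nat (card L))"
    by (simp add: sum_distrib_left sum_divide_distrib)
  also have "\<dots> = SL / of_nat (card L)" using key card_pos by (simp add: field_simps)
  finally show ?thesis using indL by simp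
qed


definition orb :: "('a \<Rightarrow> complex) \<Rightarrow> ('a \<Rightarrow> complex) set" where
  "orb f = (\<lambda>l. cact l f) ` L"
definition rep :: "('a \<Rightarrow> complex) \<Rightarrow> ('a \<Rightarrow> complex)" where
  "rep f = (SOME h. h \<in> orb f)"

lemma orb_X: "f \<in> XX \<Longrightarrow> orb f \<subseteq> XX" unfolding orb_def using cact_X by blast

lemma self_orb: "f \<in> XX \<Longrightarrow> f \<in> orb f"
  unfolding orb_def using cact_one subgroup.one_closed[OF LG] by (metis image_eqI)

lemma orb_card: assumes f: "f \<in> XX" shows "card (orb f) * card (stab f) = card L"
proof -
  have fib: "card {l \<in> L. cact l f = h} = card (stab f)" if h: "h \<in> (\<lambda>l. cact l f) ` L" for h
  proof -
    obtain l0 where l0: "l0 \<in> L" "h = cact l0 f" using h by blast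
    have l0c: "l0 \<in> carrier G" using Lc l0(1) .
    have eq: "{l \<in> L. cact l f = h} = (\<lambda>s. l0 \<otimes> s) ` stab f"
    proof
      show "{l \<in> L. cact l f = h} \<subseteq> (\<lambda>s. l0 \<otimes> s) ` stab f"
      proof
        fix l assume "l \<in> {l \<in> L. cact l f = h}"
        then have l: "l \<in> L" "cact l f = cact l0 f" using l0 by auto
        have lc: "l \<in> carrier G" using Lc l(1) .
        have "cact (inv l0 \<otimes> l) f = cact (inv l0) (cact l f)" using cact_mult lc l0c by simp
        also have "\<dots> = cact (inv l0) (cact l0 f)" using l by simp
        also have "\<dots> = cact (inv l0 \<otimes> l0) f" by (simp only: cact_mult[OF inv_closed[OF l0c] l0c])
        also have "\<dots> = f" using l0c cact_one[OF f] by simp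
        finally have "inv l0 \<otimes> l \<in> stab f" unfolding stab_def
          using l l0 LG by (simp add: subgroup.m_closed subgroup.m_inv_closed)
        moreover have "l = l0 \<otimes> (inv l0 \<otimes> l)" using lc l0c by simp
        ultimately show "l \<in> (\<lambda>s. l0 \<otimes> s) ` stab f" by blast
      qed
      show "(\<lambda>s. l0 \<otimes> s) ` stab f \<subseteq> {l \<in> L. cact l f = h}"
      proof
        fix x assume "x \<in> (\<lambda>s. l0 \<otimes> s) ` stab f"
        then obtain s where s: "s \<in> stab f" "x = l0 \<otimes> s" by blast
        have sL: "s \<in> L" "cact s f = f" using s unfolding stab_def by auto
        have "cact x f = cact l0 (cact s f)" using s cact_mult l0c Lc sL by simp
        then have "cact x f = h" using sL l0 by simp
        moreover have "x \<in> L" using s sL l0 LG by (simp add: subgroup.m_closed)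
        ultimately show "x \<in> {l \<in> L. cact l f = h}" by blast
      qed
    qed
    have "inj_on (\<lambda>s. l0 \<otimes> s) (stab f)"
    proof (rule inj_onI)
      fix x y assume xy: "x \<in> stab f" "y \<in> stab f" "l0 \<otimes> x = l0 \<otimes> y"
      then have "inv l0 \<otimes> (l0 \<otimes> x) = inv l0 \<otimes> (l0 \<otimes> y)" by simp
      then show "x = y" using l0c xy stab_sub Lc by (metis lcancel2 subsetD)
    qed
    then show ?thesis unfolding eq by (simp add: card_image)
  qed
  have "card L = card ((\<lambda>l. cact l f) ` L) * card (stab f)" by (rule card_fibers[OF fL fib])
  then show ?thesis unfolding orb_def by simp
qed

lemma orb_same: assumes f: "f \<in> XX" and h: "h \<in> orb f" shows "orb h = orb f"
proof -
  obtain l0 where l0: "l0 \<in> L" "h = cact l0 f" using h unfolding orb_def by blast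
  have l0c: "l0 \<in> carrier G" using Lc l0(1) .
  show ?thesis
  proof
    show "orb h \<subseteq> orb f"
    proof
      fix x assume "x \<in> orb h"
      then obtain l where l: "l \<in> L" "x = cact l h" unfolding orb_def by blast
      have "x = cact (l \<otimes> l0) f" using l l0 cact_mult Lc l0c by simp
      moreover have "l \<otimes> l0 \<in> L" using l l0 LG by (simp add: subgroup.m_closed)
      ultimately show "x \<in> orb f" unfolding orb_def by blast
    qed
    show "orb f \<subseteq> orb h"
    proof
      fix x assume "x \<in> orb f"
      then obtain l where l: "l \<in> L" "x = cact l f" unfolding orb_def by blast
      have lc: "l \<in> carrier G" using Lc l(1) .
      have "cact (l \<otimes> inv l0) h = cact (l \<otimes> inv l0) (cact l0 f)" using l0 by simp
      also have "\<dots> = cact ((l \<otimes> inv l0) \<otimes> l0) f" using cact_mult lc l0c by simp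
      also have "(l \<otimes> inv l0) \<otimes> l0 = l" using lc l0c by (simp add: m_assoc)
      finally have "x = cact (l \<otimes> inv l0) h" using l by simp
      moreover have "l \<otimes> inv l0 \<in> L" using l l0 LG by (simp add: subgroup.m_closed subgroup.m_inv_closed)
      ultimately show "x \<in> orb h" unfolding orb_def by blast
    qed
  qed
qed

lemma fnT_lb:
  assumes f: "f \<in> XX" and l: "l \<in> L" and b: "b \<in> B"
  shows "fnT f (l \<otimes> b) = (if l \<in> stab f then f b else 0)"
  unfolding fnT_def using Tc_char[OF f l b] hat_val[OF f _ b] by simp

lemma stab_conj:
  assumes f: "f \<in> XX" and l0: "l0 \<in> L" and l: "l \<in> L"
  shows "l \<in> stab (cact l0 f) \<longleftrightarrow> inv l0 \<otimes> l \<otimes> l0 \<in> stab f"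
proof -
  have l0c: "l0 \<in> carrier G" and lc: "l \<in> carrier G" using Lc l0 l by auto
  have il: "inv l0 \<otimes> l \<otimes> l0 \<in> L" using l0 l LG by (simp add: subgroup.m_closed subgroup.m_inv_closed)
  have e: "cact (inv l0 \<otimes> l \<otimes> l0) f = cact (inv l0) (cact l (cact l0 f))"
    using cact_mult l0c lc by simp
  show ?thesis
  proof
    assume "l \<in> stab (cact l0 f)"
    then have "cact l (cact l0 f) = cact l0 f" unfolding stab_def by blast
    then have "cact (inv l0 \<otimes> l \<otimes> l0) f = cact (inv l0) (cact l0 f)" using e by simp
    also have "\<dots> = cact (inv l0 \<otimes> l0) f" by (simp only: cact_mult[OF inv_closed[OF l0c] l0c])
    also have "\<dots> = f" using l0c cact_one[OF f] by simp
    finally show "inv l0 \<otimes> l \<otimes> l0 \<in> stab f" unfolding stab_def using il by blast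
  next
    assume "inv l0 \<otimes> l \<otimes> l0 \<in> stab f"
    then have h: "cact (inv l0 \<otimes> l \<otimes> l0) f = f" unfolding stab_def by blast
    have "cact l (cact l0 f) = cact (l0 \<otimes> (inv l0 \<otimes> l \<otimes> l0)) f"
      using cact_mult l0c lc by (simp add: m_assoc)
    also have "\<dots> = cact l0 (cact (inv l0 \<otimes> l \<otimes> l0) f)" using cact_mult l0c lc by simp
    also have "\<dots> = cact l0 f" using h by simp
    finally show "l \<in> stab (cact l0 f)" unfolding stab_def using l by blast
  qed
qed

lemma I_conj:
  assumes f: "f \<in> XX" and l0: "l0 \<in> L" and g: "g \<in> carrier G"
  shows "induced G (Tc (cact l0 f)) (hat (cact l0 f)) g = induced G (Tc f) (hat f) g"
proof -
  define f' where "f' = cact l0 f"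
  have f': "f' \<in> XX" unfolding f'_def using cact_X[OF f l0] .
  have l0c: "l0 \<in> carrier G" using Lc l0 .
  have pw: "fnT f' w = fnT f (inv l0 \<otimes> w \<otimes> l0)" if w: "w \<in> carrier G" for w
  proof (cases "w \<in> MM")
    case False
    have "inv l0 \<otimes> w \<otimes> l0 \<notin> MM"
    proof
      assume "inv l0 \<otimes> w \<otimes> l0 \<in> MM"
      moreover have "l0 \<in> MM" "inv l0 \<in> MM" using l0 L_M subgroup.m_inv_closed[OF LG l0] by auto
      ultimately have "l0 \<otimes> (inv l0 \<otimes> w \<otimes> l0) \<otimes> inv l0 \<in> MM" using M_subgroup by (simp add: subgroup.m_closed)
      moreover have "l0 \<otimes> (inv l0 \<otimes> w \<otimes> l0) \<otimes> inv l0 = w" using w l0c by (simp add: m_assoc)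
      ultimately show False using False by simp
    qed
    then show ?thesis using False Tc_M unfolding fnT_def by auto
  next
    case True
    then obtain l b where lb: "l \<in> L" "b \<in> B" "w = l \<otimes> b" unfolding MM_def using set_multE by blast
    have lc: "l \<in> carrier G" and bc: "b \<in> carrier G" using lb Lc Bc by auto
    have e: "inv l0 \<otimes> w \<otimes> l0 = (inv l0 \<otimes> l \<otimes> l0) \<otimes> (inv l0 \<otimes> b \<otimes> l0)"
      using lb lc bc l0c by (simp add: m_assoc)
    have il: "inv l0 \<otimes> l \<otimes> l0 \<in> L" using l0 lb LG by (simp add: subgroup.m_closed subgroup.m_inv_closed)
    have ib: "inv l0 \<otimes> b \<otimes> l0 \<in> B" using conjB[OF l0c lb(2)] .
    have "fnT f (inv l0 \<otimes> w \<otimes> l0) = (if inv l0 \<otimes> l \<otimes> l0 \<in> stab f then f (inv l0 \<otimes> b \<otimes> l0) else 0)"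
      unfolding e using fnT_lb[OF f il ib] .
    moreover have "fnT f' w = (if l \<in> stab f' then f' b else 0)" unfolding lb(3) using fnT_lb[OF f' lb(1,2)] .
    moreover have "f' b = f (inv l0 \<otimes> b \<otimes> l0)" unfolding f'_def cact_def using lb by simp
    ultimately show ?thesis using stab_conj[OF f l0 lb(1)] unfolding f'_def by simp
  qed
  have "(\<Sum>x\<in>carrier G. fnT f' (x \<otimes> g \<otimes> inv x)) = (\<Sum>x\<in>carrier G. fnT f (inv l0 \<otimes> (x \<otimes> g \<otimes> inv x) \<otimes> l0))"
    using pw g by (intro sum.cong) auto
  also have "\<dots> = (\<Sum>x\<in>carrier G. (\<lambda>y. fnT f (y \<otimes> g \<otimes> inv y)) (inv l0 \<otimes> x))"
  proof (rule sum.cong[OF refl])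
    fix x assume x: "x \<in> carrier G"
    have "inv l0 \<otimes> (x \<otimes> g \<otimes> inv x) \<otimes> l0 = (inv l0 \<otimes> x) \<otimes> g \<otimes> inv (inv l0 \<otimes> x)"
      using x g l0c by (simp add: m_assoc inv_mult_group)
    then show "fnT f (inv l0 \<otimes> (x \<otimes> g \<otimes> inv x) \<otimes> l0) = (\<lambda>y. fnT f (y \<otimes> g \<otimes> inv y)) (inv l0 \<otimes> x)" by simp
  qed
  also have "\<dots> = (\<Sum>x\<in>carrier G. fnT f (x \<otimes> g \<otimes> inv x))"
  proof -
    have bij: "bij_betw (\<lambda>x. inv l0 \<otimes> x) (carrier G) (carrier G)"
    proof (rule bij_betwI[where g = "\<lambda>x. l0 \<otimes> x"])
      show "(\<lambda>x. inv l0 \<otimes> x) \<in> carrier G \<rightarrow> carrier G" using l0c by simp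
      show "(\<lambda>x. l0 \<otimes> x) \<in> carrier G \<rightarrow> carrier G" using l0c by simp
      show "l0 \<otimes> (inv l0 \<otimes> x) = x" if "x \<in> carrier G" for x using l0c that by simp
      show "inv l0 \<otimes> (l0 \<otimes> x) = x" if "x \<in> carrier G" for x using l0c that by simp
    qed
    show ?thesis using sum.reindex_bij_betw[OF bij, of "\<lambda>y. fnT f (y \<otimes> g \<otimes> inv y)"] by simp
  qed
  finally have sums: "(\<Sum>x\<in>carrier G. fnT f' (x \<otimes> g \<otimes> inv x)) = (\<Sum>x\<in>carrier G. fnT f (x \<otimes> g \<otimes> inv x))" .
  have "orb f' = orb f" using orb_same[OF f] l0 unfolding f'_def orb_def by blast
  then have "card (stab f') = card (stab f)"
    using orb_card[OF f] orb_card[OF f'] card_pos(1) by (metis mult_left_cancel mult_is_0 not_gr_zero)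
  then have "card (Tc f') = card (Tc f)"
    using Tc_card[OF f] Tc_card[OF f'] card_pos(3) by (metis mult_right_cancel not_gr_zero)
  then show ?thesis unfolding f'_def[symmetric] induced_def
    using sums unfolding fnT_def by simp
qed


lemma rep_orb: "f \<in> XX \<Longrightarrow> rep f \<in> orb f"
  unfolding rep_def using self_orb by (metis someI)

lemma rep_X: "f \<in> XX \<Longrightarrow> rep f \<in> XX" using rep_orb orb_X by blast

lemma fiber_rep:
  assumes mu: "mu \<in> XX"
  shows "{f \<in> XX. rep f = rep mu} = orb (rep mu)"
proof
  have om: "orb (rep mu) = orb mu" using orb_same[OF mu rep_orb[OF mu]] .
  show "{f \<in> XX. rep f = rep mu} \<subseteq> orb (rep mu)"
  proof
    fix f assume "f \<in> {f \<in> XX. rep f = rep mu}"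
    then have f: "f \<in> XX" "rep f = rep mu" by auto
    have "orb (rep f) = orb f" using orb_same[OF f(1) rep_orb[OF f(1)]] .
    then show "f \<in> orb (rep mu)" using f self_orb by simp
  qed
  show "orb (rep mu) \<subseteq> {f \<in> XX. rep f = rep mu}"
  proof
    fix f assume fo: "f \<in> orb (rep mu)"
    then have fm: "f \<in> orb mu" using om by simp
    then have fX: "f \<in> XX" using orb_X[OF mu] by blast
    have "orb f = orb mu" using orb_same[OF mu fm] .
    then have "rep f = rep mu" unfolding rep_def by simp
    then show "f \<in> {f \<in> XX. rep f = rep mu}" using fX by simp
  qed
qed

lemma orbit_sum:
  fixes I :: "('a \<Rightarrow> complex) \<Rightarrow> complex"
  assumes inv: "\<And>f l. f \<in> XX \<Longrightarrow> l \<in> L \<Longrightarrow> I (cact l f) = I f"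
  shows "(\<Sum>f\<in>XX. (of_nat (card (stab f)) / of_nat (card L)) * I f) = (\<Sum>r\<in>rep ` XX. I r)"
proof -
  have fX: "finite XX" using X_count(1) .
  have coef: "of_nat (card (stab f)) / of_nat (card L) = 1 / (of_nat (card (orb f)) :: complex)" if f: "f \<in> XX" for f
  proof -
    have "of_nat (card (orb f)) * of_nat (card (stab f)) = (of_nat (card L) :: complex)"
      using orb_card[OF f] by (metis of_nat_mult)
    moreover have "card (orb f) > 0" using self_orb[OF f] orb_X[OF f] fX finite_subset
      by (metis card_gt_0_iff empty_iff)
    ultimately show ?thesis using card_pos(1) by (simp add: field_simps)
  qed
  have "(\<Sum>f\<in>XX. (of_nat (card (stab f)) / of_nat (card L)) * I f) = (\<Sum>f\<in>XX. I f / of_nat (card (orb f)))"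
    using coef by (intro sum.cong) auto
  also have "\<dots> = (\<Sum>r\<in>rep ` XX. \<Sum>f\<in>{f \<in> XX. rep f = r}. I f / of_nat (card (orb f)))"
    using sum.group[where S = XX and T = "rep ` XX" and g = rep and h = "\<lambda>f. I f / of_nat (card (orb f))"] fX by simp
  also have "\<dots> = (\<Sum>r\<in>rep ` XX. I r)"
  proof (rule sum.cong[OF refl])
    fix r assume "r \<in> rep ` XX"
    then obtain mu where mu: "mu \<in> XX" "r = rep mu" by blast
    have rX: "r \<in> XX" using rep_X mu by simp
    have fib: "{f \<in> XX. rep f = r} = orb r" using fiber_rep[OF mu(1)] mu by simp
    have finr: "finite (orb r)" using orb_X[OF rX] fX finite_subset by blast
    have "card (orb r) > 0" using self_orb[OF rX] finr by (metis card_gt_0_iff empty_iff)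
    have each: "I f / of_nat (card (orb f)) = I r / of_nat (card (orb r))" if f: "f \<in> orb r" for f
    proof -
      obtain l where l: "l \<in> L" "f = cact l r" using f unfolding orb_def by blast
      have "I f = I r" using inv[OF rX l(1)] l by simp
      moreover have "orb f = orb r" using orb_same[OF rX f] .
      ultimately show ?thesis by simp
    qed
    have "(\<Sum>f\<in>{f \<in> XX. rep f = r}. I f / of_nat (card (orb f))) = (\<Sum>f\<in>orb r. I r / of_nat (card (orb r)))"
      unfolding fib using each by (rule sum.cong[OF refl])
    also have "\<dots> = I r" using \<open>card (orb r) > 0\<close> by simp
    finally show "(\<Sum>f\<in>{f \<in> XX. rep f = r}. I f / of_nat (card (orb f))) = I r" .
  qed
  finally show ?thesis .
qed

definition one_ch :: "'a \<Rightarrow> complex" where "one_ch = (\<lambda>_. 1)"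

lemma one_X: "one_ch \<in> XX" unfolding XX_def chars_def one_ch_def by simp
lemma cact_one_ch: "cact l one_ch = one_ch" unfolding cact_def one_ch_def by auto
lemma orb_one: "orb one_ch = {one_ch}" unfolding orb_def using cact_one_ch subgroup.one_closed[OF LG] by auto
lemma rep_one: "rep one_ch = one_ch" unfolding rep_def orb_one by simp
lemma stab_one: "stab one_ch = L" unfolding stab_def using cact_one_ch by simp
lemma Tc_one: "Tc one_ch = MM" unfolding Tc_def MM_def stab_one ..
lemma hat_one: "hat one_ch t = 1" unfolding hat_def one_ch_def by simp

lemma step:
  "\<exists>(r::nat) (Hs :: nat \<Rightarrow> 'a set) (chis :: nat \<Rightarrow> 'a \<Rightarrow> complex).
     (\<forall>j<r. subgroup (Hs j) G \<and> linear_char G (Hs j) (chis j)) \<and>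
     (\<forall>g\<in>carrier G. induced G L trivial_char g =
        induced G MM trivial_char g + (\<Sum>j<r. induced G (Hs j) (chis j) g))"
proof -
  define R where "R = rep ` XX - {one_ch}"
  have fR: "finite R" unfolding R_def using X_count(1) by simp
  obtain hh where hh: "bij_betw hh {0..<card R} R" using ex_bij_betw_nat_finite[OF fR] by blast
  have RX: "R \<subseteq> XX" unfolding R_def using rep_X by blast
  have oneR: "one_ch \<in> rep ` XX" using rep_one one_X by (metis image_eqI)
  show ?thesis
  proof (intro exI conjI allI impI ballI)
    fix j assume "j < card R"
    then have "hh j \<in> R" using hh bij_betwE by fastforce
    then have "hh j \<in> XX" using RX by blast
    then show "subgroup ((\<lambda>j. Tc (hh j)) j) G" "linear_char G ((\<lambda>j. Tc (hh j)) j) ((\<lambda>j. hat (hh j)) j)"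
      using Tc_subgroup hat_linear by auto
  next
    fix g assume g: "g \<in> carrier G"
    let ?I = "\<lambda>f. induced G (Tc f) (hat f) g"
    have "induced G L trivial_char g = (\<Sum>f\<in>XX. (of_nat (card (stab f)) / of_nat (card L)) * ?I f)"
      by (rule ind_decomp[OF g])
    also have "\<dots> = (\<Sum>r\<in>rep ` XX. ?I r)" by (rule orbit_sum) (use I_conj g in auto)
    also have "\<dots> = ?I one_ch + (\<Sum>r\<in>R. ?I r)"
      unfolding R_def using oneR X_count(1) by (simp add: sum.remove)
    also have "?I one_ch = induced G MM trivial_char g"
      unfolding induced_def Tc_one hat_one trivial_char_def ..
    also have "(\<Sum>r\<in>R. ?I r) = (\<Sum>j<card R. ?I (hh j))"
      using sum.reindex_bij_betw[OF hh, of ?I] by (simp add: atLeast0LessThan)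
    finally show "induced G L trivial_char g = induced G MM trivial_char g +
        (\<Sum>j<card R. induced G ((\<lambda>j. Tc (hh j)) j) ((\<lambda>j. hat (hh j)) j) g)" by simp
  qed
qed

end

lemma sum_lessThan_concat:
  fixes F :: "nat \<Rightarrow> 'c::comm_monoid_add"
  shows "(\<Sum>j<a + b. F j) = (\<Sum>j<a. F j) + (\<Sum>j<b. F (a + j))"
  by (induction b) (simp_all add: add.assoc)

context group begin

lemma derived_series_Suc: "derived_series G (Suc m) = derived G (derived_series G m)"
  unfolding derived_series_def by simp

lemma derived_series_normal: "derived_series G m \<lhd> G"
proof (induction m)
  case 0 then show ?case unfolding derived_series_def using normal_self by simp
next
  case (Suc m) then show ?case unfolding derived_series_Suc by (rule derived_is_normal)
qed

lemma derived_series_subgroup: "subgroup (derived_series G m) G"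
  using derived_series_normal normal_imp_subgroup by blast

lemma derived_series_mono: "derived_series G (Suc m) \<subseteq> derived_series G m"
  unfolding derived_series_Suc using derived_incl[OF subset_refl derived_series_subgroup] .

lemma comm_in_derived: "x \<in> derived_series G m \<Longrightarrow> y \<in> derived_series G m \<Longrightarrow>
    x \<otimes> y \<otimes> inv x \<otimes> inv y \<in> derived_series G (Suc m)"
  unfolding derived_series_Suc derived_def by (rule generate.incl) blast

lemma derived_one: "derived G {\<one>} = {\<one>}"
proof
  have "subgroup {\<one>} G" using one_is_normal normal_imp_subgroup by blast
  then show "derived G {\<one>} \<subseteq> {\<one>}" using derived_incl[OF subset_refl] by blast
  show "{\<one>} \<subseteq> derived G {\<one>}" using subgroup.one_closed[OF derived_is_subgroup] by simp
qed

lemma sub_mult_absorb: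
  assumes "subgroup K G" "subgroup H' G" "K \<subseteq> H'"
  shows "K <#> H' = H'"
proof
  show "K <#> H' \<subseteq> H'" unfolding set_mult_def using assms by (auto simp: subgroup.m_closed)
  show "H' \<subseteq> K <#> H'"
  proof
    fix x assume x: "x \<in> H'"
    have "\<one> \<otimes> x \<in> K <#> H'" using set_multI[OF subgroup.one_closed[OF assms(1)] x] .
    then show "x \<in> K <#> H'" using subgroup.mem_carrier[OF assms(2) x] by simp
  qed
qed

end

context group begin
lemma main_result:
  assumes fin: "finite (carrier G)" and solv: "solvable G" and HG: "subgroup H G"
  shows "\<exists>(r::nat) (Hs :: nat \<Rightarrow> 'a set) (chis :: nat \<Rightarrow> 'a \<Rightarrow> complex).
           (\<forall>j<r. subgroup (Hs j) G \<and> linear_char G (Hs j) (chis j)) \<and>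
           (\<forall>g\<in>carrier G.
              induced G H trivial_char g =
                induced G (H <#> derived_series G i) trivial_char g
                + (\<Sum>j<r. induced G (Hs j) (chis j) g))"
proof -
  define P where "P m = (\<exists>(r::nat) (Hs :: nat \<Rightarrow> 'a set) (chis :: nat \<Rightarrow> 'a \<Rightarrow> complex).
           (\<forall>j<r. subgroup (Hs j) G \<and> linear_char G (Hs j) (chis j)) \<and>
           (\<forall>g\<in>carrier G.
              induced G H trivial_char g =
                induced G (H <#> derived_series G m) trivial_char g
                + (\<Sum>j<r. induced G (Hs j) (chis j) g)))" for m
  obtain k where k: "(derived G ^^ k) (carrier G) = {\<one>}"
    using solv solvable_iff_trivial_derived_seq by blast
  have triv: "derived_series G (k + d) = {\<one>}" for d
  proof (induction d)
    case 0 then show ?case using k unfolding derived_series_def by simp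
  next
    case (Suc d) then show ?case using derived_one by (simp add: derived_series_Suc)
  qed
  have Hc: "H \<subseteq> carrier G" using HG subgroup.subset by blast
  have base: "P m" if "m \<ge> k" for m
  proof -
    have "derived_series G m = {\<one>}" using triv[of "m - k"] that by simp
    then have "H <#> derived_series G m = H" using Hc by (simp add: r_coset_eq_set_mult[symmetric])
    then show ?thesis unfolding P_def by (intro exI[of _ "0::nat"]) auto
  qed
  have down: "P m" if PS: "P (Suc m)" for m
  proof -
    define L where "L = H <#> derived_series G (Suc m)"
    define B where "B = derived_series G m"
    have LG: "subgroup L G" unfolding L_def using normal_prod_subgroup[OF HG derived_series_normal] .
    have DL: "derived_series G (Suc m) \<subseteq> L"
    proof
      fix x assume x: "x \<in> derived_series G (Suc m)"
      have "\<one> \<otimes> x \<in> L" unfolding L_def using set_multI[OF subgroup.one_closed[OF HG] x] .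
      then show "x \<in> L" using subgroup.mem_carrier[OF derived_series_subgroup x] by simp
    qed
    have commBL: "comm_in G B L" unfolding comm_in_def B_def using comm_in_derived DL by blast
    have ss: "stepsetup G L B"
      by (intro stepsetup.intro stepsetup_axioms.intro is_group)
        (use fin LG derived_series_normal commBL in \<open>auto simp: B_def\<close>)
    interpret S: stepsetup G L B by (rule ss)
    have MM: "S.MM = H <#> derived_series G m"
    proof -
      have "S.MM = (H <#> derived_series G (Suc m)) <#> derived_series G m" using S.MM_def unfolding L_def B_def by simp
      also have "\<dots> = H <#> (derived_series G (Suc m) <#> derived_series G m)"
        using set_mult_assoc Hc derived_series_subgroup subgroup.subset by metis
      also have "derived_series G (Suc m) <#> derived_series G m = derived_series G m"
        using sub_mult_absorb[OF derived_series_subgroup derived_series_subgroup derived_series_mono] .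
      finally show ?thesis .
    qed
    obtain r1 :: nat and Hs1 :: "nat \<Rightarrow> 'a set" and chis1 :: "nat \<Rightarrow> 'a \<Rightarrow> complex" where h1: "\<forall>j<r1. subgroup (Hs1 j) G \<and> linear_char G (Hs1 j) (chis1 j)"
      "\<forall>g\<in>carrier G. induced G H trivial_char g = induced G L trivial_char g + (\<Sum>j<r1. induced G (Hs1 j) (chis1 j) g)"
      using PS[unfolded P_def, folded L_def] by blast
    obtain r2 :: nat and Hs2 :: "nat \<Rightarrow> 'a set" and chis2 :: "nat \<Rightarrow> 'a \<Rightarrow> complex" where h2: "\<forall>j<r2. subgroup (Hs2 j) G \<and> linear_char G (Hs2 j) (chis2 j)"
      "\<forall>g\<in>carrier G. induced G L trivial_char g = induced G S.MM trivial_char g + (\<Sum>j<r2. induced G (Hs2 j) (chis2 j) g)"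
      using S.step by blast
    define Hs where "Hs j = (if j < r1 then Hs1 j else Hs2 (j - r1))" for j
    define chis where "chis j = (if j < r1 then chis1 j else chis2 (j - r1))" for j
    show ?thesis unfolding P_def
    proof (intro exI[of _ "r1 + r2"] exI[of _ Hs] exI[of _ chis] conjI allI impI ballI)
      fix j assume "j < r1 + r2"
      then show "subgroup (Hs j) G" "linear_char G (Hs j) (chis j)"
        using h1(1) h2(1) unfolding Hs_def chis_def by (auto split: if_splits)
    next
      fix g assume g: "g \<in> carrier G"
      have "(\<Sum>j<r1 + r2. induced G (Hs j) (chis j) g) =
          (\<Sum>j<r1. induced G (Hs1 j) (chis1 j) g) + (\<Sum>j<r2. induced G (Hs2 j) (chis2 j) g)"
        unfolding sum_lessThan_concat Hs_def chis_def by simp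
      then show "induced G H trivial_char g = induced G (H <#> derived_series G m) trivial_char g +
          (\<Sum>j<r1 + r2. induced G (Hs j) (chis j) g)"
        using h1(2) h2(2) g MM by simp
    qed
  qed
  have "P m" for m
  proof (induction "k - m" arbitrary: m)
    case 0 then show ?case using base by simp
  next
    case (Suc d)
    then have "d = k - Suc m" by simp
    then have "P (Suc m)" using Suc.hyps(1) by blast
    then show ?case by (rule down)
  qed
  then show ?thesis unfolding P_def by blast
qed

end

theorem corollary3p1p4:
  fixes G :: "('a, 'b) monoid_scheme" and H :: "'a set" and i :: nat
  assumes "group G" and "finite (carrier G)" and "solvable G"
    and "subgroup H G" and "i \<ge> 1"
  shows "\<exists>(r::nat) (Hs :: nat \<Rightarrow> 'a set) (chis :: nat \<Rightarrow> 'a \<Rightarrow> complex).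
           (\<forall>j<r. subgroup (Hs j) G \<and> linear_char G (Hs j) (chis j)) \<and>
           (\<forall>g\<in>carrier G.
              induced G H trivial_char g =
                induced G (H <#>\<^bsub>G\<^esub> derived_series G i) trivial_char g
                + (\<Sum>j<r. induced G (Hs j) (chis j) g))"
  using group.main_result[OF assms(1,2,3,4)] .

end
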